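(* Let $S$ be a (left and right) Ore set in a ring $R$. Then there exists a pair $(Q,f)$, with $Q$ a ring and $f:R\to Q$ a ring homomorphism, such that (i) $f(s)$ is a unit of $Q$ for all $s\in S$, and for every pair $(Q',f')$ satisfying (i) there is a unique ring homomorphism $h:Q\to Q'$ with $f'=hf$. The ring $Q$ is unique up to isomorphism and is isomorphic to the localization of $R/\mathfrak p(S)$ at $\pi(S)$, where $\pi:R\to R/\mathfrak p(S)$ is the canonical map and $\pi(S)$ is a left and right denominator set of $R/\mathfrak p(S)$ consisting of regular elements.
   Context: Rings are associative with $1$. A multiplicatively closed subset $S$ ($1\in S$, $0\notin S$) is an Ore set if $Sr\cap Rs\ne\emptyset$ and $rS\cap sR\ne\emptyset$ for all $r\in R,s\in S$; a (left and right) denominator set is an Ore set such that $rs=0$ ($s\in S$) implies $tr=0$ for some $t\in S$ and $sr=0$ implies $rt=0$ for some $t\in S$. For a ring $B$ and $T\subseteq B$, $\mathrm{ass}_l(T,B):=\{b\mid tb=0\text{ for some }t\in T\}$, $\mathrm{ass}_r(T,B):=\{b\mid bt=0\text{ for some }t\in T\}$. Define ideals $\mathfrak p_\alpha$ ($\alpha\ge1$ ordinals): $\mathfrak p_1:=\mathrm{ass}_l(S,R)+\mathrm{ass}_r(S,R)$; $\mathfrak p_{\alpha+1}:=\pi_\alpha^{-1}(\mathrm{ass}_l(\pi_\alpha(S),R/\mathfrak p_\alpha)+\mathrm{ass}_r(\pi_\alpha(S),R/\mathfrak p_\alpha))$ with $\pi_\alpha:R\to R/\mathfrak p_\alpha$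 canonical; $\mathfrak p_\alpha:=\bigcup_{\beta<\alpha}\mathfrak p_\beta$ for limit $\alpha$; $\mathfrak p(S):=\bigcup_\alpha\mathfrak p_\alpha$. *)

theory Defs
  imports "HOL-Algebra.Algebra"
begin

definition ore_set :: "('a, 'm) ring_scheme \<Rightarrow> 'a set \<Rightarrow> bool" where
  "ore_set R S \<longleftrightarrow> S \<subseteq> carrier R \<and> \<one>\<^bsub>R\<^esub> \<in> S \<and> \<zero>\<^bsub>R\<^esub> \<notin> S \<and>
     (\<forall>s\<in>S. \<forall>t\<in>S. s \<otimes>\<^bsub>R\<^esub> t \<in> S) \<and>
     (\<forall>r\<in>carrier R. \<forall>s\<in>S.
        (\<exists>s'\<in>S. \<exists>r'\<in>carrier R. s' \<otimes>\<^bsub>R\<^esub> r = r' \<otimes>\<^bsub>R\<^esub> s) \<and>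
        (\<exists>s'\<in>S. \<exists>r'\<in>carrier R. r \<otimes>\<^bsub>R\<^esub> s' = s \<otimes>\<^bsub>R\<^esub> r'))"

definition denominator_set :: "('a, 'm) ring_scheme \<Rightarrow> 'a set \<Rightarrow> bool" where
  "denominator_set R S \<longleftrightarrow> ore_set R S \<and>
     (\<forall>r\<in>carrier R. \<forall>s\<in>S. r \<otimes>\<^bsub>R\<^esub> s = \<zero>\<^bsub>R\<^esub> \<longrightarrow> (\<exists>t\<in>S. t \<otimes>\<^bsub>R\<^esub> r = \<zero>\<^bsub>R\<^esub>)) \<and>
     (\<forall>r\<in>carrier R. \<forall>s\<in>S. s \<otimes>\<^bsub>R\<^esub> r = \<zero>\<^bsub>R\<^esub> \<longrightarrow> (\<exists>t\<in>S. r \<otimes>\<^bsub>R\<^esub> t = \<zero>\<^bsub>R\<^esub>))"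

definition regular_elem :: "('a, 'm) ring_scheme \<Rightarrow> 'a \<Rightarrow> bool" where
  "regular_elem R a \<longleftrightarrow> a \<in> carrier R \<and>
     (\<forall>x\<in>carrier R. a \<otimes>\<^bsub>R\<^esub> x = \<zero>\<^bsub>R\<^esub> \<longrightarrow> x = \<zero>\<^bsub>R\<^esub>) \<and>
     (\<forall>x\<in>carrier R. x \<otimes>\<^bsub>R\<^esub> a = \<zero>\<^bsub>R\<^esub> \<longrightarrow> x = \<zero>\<^bsub>R\<^esub>)"

definition ass_l :: "'b set \<Rightarrow> ('b, 'n) ring_scheme \<Rightarrow> 'b set" where
  "ass_l T B = {b \<in> carrier B. \<exists>t\<in>T. t \<otimes>\<^bsub>B\<^esub> b = \<zero>\<^bsub>B\<^esub>}"

definition ass_r :: "'b set \<Rightarrow> ('b, 'n) ring_scheme \<Rightarrow> 'b set" where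
  "ass_r T B = {b \<in> carrier B. \<exists>t\<in>T. b \<otimes>\<^bsub>B\<^esub> t = \<zero>\<^bsub>B\<^esub>}"

definition canon :: "('a, 'm) ring_scheme \<Rightarrow> 'a set \<Rightarrow> 'a \<Rightarrow> 'a set" where
  "canon R I x = I +>\<^bsub>R\<^esub> x"

definition p_one :: "('a, 'm) ring_scheme \<Rightarrow> 'a set \<Rightarrow> 'a set" where
  "p_one R S = ass_l S R <+>\<^bsub>R\<^esub> ass_r S R"

definition p_succ :: "('a, 'm) ring_scheme \<Rightarrow> 'a set \<Rightarrow> 'a set \<Rightarrow> 'a set" where
  "p_succ R S I = {x \<in> carrier R. canon R I x \<in>
      ass_l (canon R I ` S) (R Quot I) <+>\<^bsub>R Quot I\<^esub> ass_r (canon R I ` S) (R Quot I)}"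

text \<open>The transfinite sequence (p_\<alpha>)_{\<alpha>\<ge>1}, encoded without ordinals: the set of all stages is
  the least family containing p_1, closed under the successor step and under unions of
  nonempty subfamilies (limit stages).  p(S) is the union of all stages.\<close>
inductive_set p_stages :: "('a, 'm) ring_scheme \<Rightarrow> 'a set \<Rightarrow> 'a set set"
  for R :: "('a, 'm) ring_scheme" and S :: "'a set" where
  base: "p_one R S \<in> p_stages R S"
| succ: "I \<in> p_stages R S \<Longrightarrow> p_succ R S I \<in> p_stages R S"
| lim: "\<forall>I\<in>C. I \<in> p_stages R S \<Longrightarrow> \<exists>I. I \<in> C \<Longrightarrow> \<Union>C \<in> p_stages R S"

definition p_of :: "('a, 'm) ring_scheme \<Rightarrow> 'a set \<Rightarrow> 'a set" where
  "p_of R S = \<Union>(p_stages R S)"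

definition inverts :: "('a, 'm) ring_scheme \<Rightarrow> 'a set \<Rightarrow> ('b, 'n) ring_scheme \<Rightarrow> ('a \<Rightarrow> 'b) \<Rightarrow> bool" where
  "inverts R S Q f \<longleftrightarrow> ring Q \<and> f \<in> ring_hom R Q \<and> (\<forall>s\<in>S. f s \<in> Units Q)"

text \<open>Universal property of (Q,f) with respect to all test pairs (Q',f') whose ring Q'
  has elements of type 't (types cannot be quantified inside HOL formulas).\<close>
definition universal_for ::
  "('a, 'm) ring_scheme \<Rightarrow> 'a set \<Rightarrow> ('b, 'n) ring_scheme \<Rightarrow> ('a \<Rightarrow> 'b) \<Rightarrow> 't itself \<Rightarrow> bool" where
  "universal_for R S Q f _ \<longleftrightarrow> inverts R S Q f \<and>
     (\<forall>(Q' :: 't ring) f'. inverts R S Q' f' \<longrightarrow>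
        (\<exists>h. h \<in> ring_hom Q Q' \<and> (\<forall>r\<in>carrier R. f' r = h (f r)) \<and>
             (\<forall>h'. h' \<in> ring_hom Q Q' \<and> (\<forall>r\<in>carrier R. f' r = h' (f r)) \<longrightarrow>
                   (\<forall>q\<in>carrier Q. h' q = h q))))"

definition left_localization ::
  "('b, 'n) ring_scheme \<Rightarrow> 'b set \<Rightarrow> ('c, 'k) ring_scheme \<Rightarrow> ('b \<Rightarrow> 'c) \<Rightarrow> bool" where
  "left_localization B T Q \<phi> \<longleftrightarrow> ring Q \<and> \<phi> \<in> ring_hom B Q \<and> (\<forall>t\<in>T. \<phi> t \<in> Units Q) \<and>
     (\<forall>q\<in>carrier Q. \<exists>t\<in>T. \<exists>b\<in>carrier B. q = inv\<^bsub>Q\<^esub> (\<phi> t) \<otimes>\<^bsub>Q\<^esub> \<phi> b) \<and>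
     {b \<in> carrier B. \<phi> b = \<zero>\<^bsub>Q\<^esub>} = ass_l T B"

end

theory Submission
  imports Defs
begin


locale ore_loc = ring B for B (structure) +
  fixes T
  assumes T_sub: "T \<subseteq> carrier B" and T_one: "\<one> \<in> T"
    and T_mult: "\<And>s t. s \<in> T \<Longrightarrow> t \<in> T \<Longrightarrow> s \<otimes> t \<in> T"
    and T_ore: "\<And>r s. r \<in> carrier B \<Longrightarrow> s \<in> T \<Longrightarrow> \<exists>s'\<in>T. \<exists>r'\<in>carrier B. s' \<otimes> r = r' \<otimes> s"
    and T_regl: "\<And>t x. t \<in> T \<Longrightarrow> x \<in> carrier B \<Longrightarrow> t \<otimes> x = \<zero> \<Longrightarrow> x = \<zero>"
    and T_regr: "\<And>t x. t \<in> T \<Longrightarrow> x \<in> carrier B \<Longrightarrow> x \<otimes> t = \<zero> \<Longrightarrow> x = \<zero>"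
begin

lemma Tc: "t \<in> T \<Longrightarrow> t \<in> carrier B" using T_sub by auto

lemma T_cancel: assumes "t \<in> T" "x \<in> carrier B" "y \<in> carrier B" "t \<otimes> x = t \<otimes> y" shows "x = y"
proof -
  have "t \<otimes> (x \<ominus> y) = \<zero>" using assms Tc[OF assms(1)]
    by (simp add: r_distr minus_eq r_minus r_neg)
  hence "x \<ominus> y = \<zero>" using T_regl assms by auto
  thus ?thesis using assms by (metis minus_equality add.inv_closed a_minus_def r_neg add.inv_inv)
qed

definition lin :: "('a \<times> 'a) set \<Rightarrow> bool" where
 "lin H \<longleftrightarrow> H \<subseteq> carrier B \<times> carrier B \<and> (\<forall>x y y'. (x,y)\<in>H \<longrightarrow> (x,y')\<in>H \<longrightarrow> y = y') \<and>
    (\<forall>x y c. (x,y)\<in>H \<longrightarrow> c \<in> carrier B \<longrightarrow> (c\<otimes>x, c\<otimes>y)\<in>H) \<and>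
    (\<forall>x y x' y'. (x,y)\<in>H \<longrightarrow> (x',y')\<in>H \<longrightarrow> (x\<oplus>x', y\<oplus>y')\<in>H) \<and> (\<exists>t\<in>T. \<exists>y. (t,y)\<in>H)"

definition satd :: "('a \<times> 'a) set \<Rightarrow> bool" where
 "satd F \<longleftrightarrow> (\<forall>u\<in>T. \<forall>x\<in>carrier B. \<forall>y\<in>carrier B. (u\<otimes>x, u\<otimes>y)\<in>F \<longrightarrow> (x,y)\<in>F)"

definition Qc :: "('a \<times> 'a) set set" where "Qc = {F. lin F \<and> satd F}"

definition sat :: "('a \<times> 'a) set \<Rightarrow> ('a \<times> 'a) set" where
 "sat H = {(x,y). x \<in> carrier B \<and> y \<in> carrier B \<and> (\<exists>u\<in>T. (u\<otimes>x, u\<otimes>y) \<in> H)}"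

definition qadd :: "('a \<times> 'a) set \<Rightarrow> ('a \<times> 'a) set \<Rightarrow> ('a \<times> 'a) set" where
 "qadd F G = sat {(x, y \<oplus> z) | x y z. (x,y)\<in>F \<and> (x,z)\<in>G}"

definition qmult :: "('a \<times> 'a) set \<Rightarrow> ('a \<times> 'a) set \<Rightarrow> ('a \<times> 'a) set" where
 "qmult F G = sat (F O G)"

definition Q :: "('a \<times> 'a) set ring" where
 "Q = \<lparr>carrier = Qc, monoid.mult = qmult, monoid.one = Id_on (carrier B), ring.zero = carrier B \<times> {\<zero>}, ring.add = qadd\<rparr>"

lemma Qc_carr: "F \<in> Qc \<Longrightarrow> (x,y) \<in> F \<Longrightarrow> x \<in> carrier B \<and> y \<in> carrier B"
  unfolding Qc_def lin_def by auto
lemma Qc_fun: "F \<in> Qc \<Longrightarrow> (x,y) \<in> F \<Longrightarrow> (x,y') \<in> F \<Longrightarrow> y = y'"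
  unfolding Qc_def lin_def by blast
lemma Qc_smult: "F \<in> Qc \<Longrightarrow> (x,y) \<in> F \<Longrightarrow> c \<in> carrier B \<Longrightarrow> (c\<otimes>x, c\<otimes>y) \<in> F"
  unfolding Qc_def lin_def by blast
lemma Qc_add: "F \<in> Qc \<Longrightarrow> (x,y) \<in> F \<Longrightarrow> (x',y') \<in> F \<Longrightarrow> (x\<oplus>x', y\<oplus>y') \<in> F"
  unfolding Qc_def lin_def by blast
lemma Qc_dom0: "F \<in> Qc \<Longrightarrow> \<exists>t\<in>T. \<exists>y. (t,y) \<in> F"
  unfolding Qc_def lin_def by blast
lemma Qc_sat: "F \<in> Qc \<Longrightarrow> u \<in> T \<Longrightarrow> x \<in> carrier B \<Longrightarrow> y \<in> carrier B \<Longrightarrow> (u\<otimes>x, u\<otimes>y) \<in> F \<Longrightarrow> (x,y) \<in> F"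
  unfolding Qc_def satd_def by blast

lemma Qc_dom: assumes F: "F \<in> Qc" and x: "x \<in> carrier B" shows "\<exists>u\<in>T. \<exists>y. (u\<otimes>x, y) \<in> F"
proof -
  obtain t y where t: "t \<in> T" "(t,y) \<in> F" using Qc_dom0[OF F] by blast
  obtain s' r' where sr: "s' \<in> T" "r' \<in> carrier B" "s' \<otimes> x = r' \<otimes> t" using T_ore[OF x t(1)] by blast
  have "(r' \<otimes> t, r' \<otimes> y) \<in> F" using Qc_smult[OF F t(2) sr(2)] .
  thus ?thesis using sr by metis
qed

lemma Qc_ext1: assumes F: "F \<in> Qc" and G: "G \<in> Qc" and t: "t \<in> T" "(t,y) \<in> F" "(t,y) \<in> G"
  shows "F \<subseteq> G"
proof
  fix p assume "p \<in> F"
  then obtain x z where p: "p = (x,z)" "(x,z) \<in> F" by (cases p) auto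
  have xz: "x \<in> carrier B" "z \<in> carrier B" using Qc_carr[OF F p(2)] by auto
  obtain u c where uc: "u \<in> T" "c \<in> carrier B" "u \<otimes> x = c \<otimes> t" using T_ore[OF xz(1) t(1)] by blast
  have 1: "(c \<otimes> t, c \<otimes> y) \<in> F" "(c \<otimes> t, c \<otimes> y) \<in> G" using Qc_smult F G t uc by auto
  have 2: "(u \<otimes> x, u \<otimes> z) \<in> F" using Qc_smult[OF F p(2) Tc[OF uc(1)]] .
  have "u \<otimes> z = c \<otimes> y" using Qc_fun[OF F 2] 1 uc by simp
  hence "(u \<otimes> x, u \<otimes> z) \<in> G" using 1 uc by simp
  thus "p \<in> G" using Qc_sat[OF G uc(1) xz] p by simp
qed

lemma Qc_ext: "F \<in> Qc \<Longrightarrow> G \<in> Qc \<Longrightarrow> t \<in> T \<Longrightarrow> (t,y) \<in> F \<Longrightarrow> (t,y) \<in> G \<Longrightarrow> F = G"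
  using Qc_ext1 by blast

lemma sat_sub: "H \<subseteq> carrier B \<times> carrier B \<Longrightarrow> H \<subseteq> sat H"
  unfolding sat_def using T_one by force

lemma satI: "x \<in> carrier B \<Longrightarrow> y \<in> carrier B \<Longrightarrow> u \<in> T \<Longrightarrow> (u\<otimes>x, u\<otimes>y) \<in> H \<Longrightarrow> (x,y) \<in> sat H"
  unfolding sat_def by blast

lemma sat_Qc: assumes H: "lin H" shows "sat H \<in> Qc"
proof -
  have Hc: "H \<subseteq> carrier B \<times> carrier B" and Hf: "\<And>x y y'. (x,y)\<in>H \<Longrightarrow> (x,y')\<in>H \<Longrightarrow> y = y'"
    and Hs: "\<And>x y c. (x,y)\<in>H \<Longrightarrow> c \<in> carrier B \<Longrightarrow> (c\<otimes>x, c\<otimes>y)\<in>H"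
    and Ha: "\<And>x y x' y'. (x,y)\<in>H \<Longrightarrow> (x',y')\<in>H \<Longrightarrow> (x\<oplus>x', y\<oplus>y')\<in>H"
    and Hd: "\<exists>t\<in>T. \<exists>y. (t,y)\<in>H" using H unfolding lin_def by blast+
  have fn: "y = y'" if a: "(x,y) \<in> sat H" "(x,y') \<in> sat H" for x y y'
  proof -
    obtain u u' where u: "u \<in> T" "(u\<otimes>x, u\<otimes>y) \<in> H" "u' \<in> T" "(u'\<otimes>x, u'\<otimes>y') \<in> H"
      and c: "x \<in> carrier B" "y \<in> carrier B" "y' \<in> carrier B"
      using a unfolding sat_def by blast
    obtain s r where sr: "s \<in> T" "r \<in> carrier B" "s \<otimes> u = r \<otimes> u'" using T_ore[OF Tc[OF u(1)] u(3)] by blast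
    have cc: "u \<in> carrier B" "u' \<in> carrier B" "s \<in> carrier B" using u sr Tc by auto
    have 1: "(s \<otimes> (u\<otimes>x), s \<otimes> (u\<otimes>y)) \<in> H" using Hs[OF u(2)] cc by auto
    have 2: "(r \<otimes> (u'\<otimes>x), r \<otimes> (u'\<otimes>y')) \<in> H" using Hs[OF u(4)] sr by auto
    have e1: "s \<otimes> (u\<otimes>x) = r \<otimes> (u'\<otimes>x)" using sr cc c by (metis m_assoc)
    have "s \<otimes> (u\<otimes>y) = r \<otimes> (u'\<otimes>y')" using Hf[OF 1] 2 e1 by simp
    hence "(s \<otimes> u) \<otimes> y = (s \<otimes> u) \<otimes> y'" using sr cc c by (metis m_assoc)
    thus ?thesis using T_cancel T_mult sr u c by blast
  qed
  have sm: "(c\<otimes>x, c\<otimes>y) \<in> sat H" if a: "(x,y) \<in> sat H" "c \<in> carrier B" for x y c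
  proof -
    obtain u where u: "u \<in> T" "(u\<otimes>x, u\<otimes>y) \<in> H" and xy: "x \<in> carrier B" "y \<in> carrier B"
      using a unfolding sat_def by blast
    obtain s r where sr: "s \<in> T" "r \<in> carrier B" "s \<otimes> c = r \<otimes> u" using T_ore[OF a(2) u(1)] by blast
    have "(r \<otimes> (u\<otimes>x), r \<otimes> (u\<otimes>y)) \<in> H" using Hs[OF u(2) sr(2)] .
    moreover have "r \<otimes> (u\<otimes>x) = s \<otimes> (c \<otimes> x)" "r \<otimes> (u\<otimes>y) = s \<otimes> (c \<otimes> y)"
      using sr xy a(2) Tc[OF u(1)] Tc[OF sr(1)] by (metis m_assoc)+
    ultimately show ?thesis using satI sr xy a(2) by auto
  qed
  have ad: "(x\<oplus>x', y\<oplus>y') \<in> sat H" if a: "(x,y) \<in> sat H" "(x',y') \<in> sat H" for x y x' y'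
  proof -
    obtain u u' where u: "u \<in> T" "(u\<otimes>x, u\<otimes>y) \<in> H" "u' \<in> T" "(u'\<otimes>x', u'\<otimes>y') \<in> H"
      and c: "x \<in> carrier B" "y \<in> carrier B" "x' \<in> carrier B" "y' \<in> carrier B"
      using a unfolding sat_def by blast
    obtain s r where sr: "s \<in> T" "r \<in> carrier B" "s \<otimes> u = r \<otimes> u'" using T_ore[OF Tc[OF u(1)] u(3)] by blast
    have cc: "u \<in> carrier B" "u' \<in> carrier B" "s \<in> carrier B" using u sr Tc by auto
    have 1: "(s \<otimes> (u\<otimes>x), s \<otimes> (u\<otimes>y)) \<in> H" using Hs[OF u(2)] cc by auto
    have 2: "(r \<otimes> (u'\<otimes>x'), r \<otimes> (u'\<otimes>y')) \<in> H" using Hs[OF u(4)] sr by auto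
    have 3: "(s \<otimes> (u\<otimes>x) \<oplus> r \<otimes> (u'\<otimes>x'), s \<otimes> (u\<otimes>y) \<oplus> r \<otimes> (u'\<otimes>y')) \<in> H" using Ha[OF 1 2] .
    have eqs: "s \<otimes> (u\<otimes>x) \<oplus> r \<otimes> (u'\<otimes>x') = (s \<otimes> u) \<otimes> (x \<oplus> x')"
      "s \<otimes> (u\<otimes>y) \<oplus> r \<otimes> (u'\<otimes>y') = (s \<otimes> u) \<otimes> (y \<oplus> y')"
      using sr cc c by (simp_all add: r_distr m_assoc[symmetric])
    have su: "s \<otimes> u \<in> T" using T_mult sr(1) u(1) by blast
    have "((s \<otimes> u) \<otimes> (x \<oplus> x'), (s \<otimes> u) \<otimes> (y \<oplus> y')) \<in> H" using 3 eqs by simp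
    thus ?thesis using satI[OF a_closed[OF c(1,3)] a_closed[OF c(2,4)] su] by blast
  qed
  have dom: "\<exists>t\<in>T. \<exists>y. (t,y) \<in> sat H" using Hd sat_sub[OF Hc] by blast
  have sd: "satd (sat H)" unfolding satd_def
  proof (intro ballI impI)
    fix u x y assume a: "u \<in> T" "x \<in> carrier B" "y \<in> carrier B" "(u\<otimes>x, u\<otimes>y) \<in> sat H"
    then obtain v where v: "v \<in> T" "(v \<otimes> (u\<otimes>x), v\<otimes>(u\<otimes>y)) \<in> H" unfolding sat_def by blast
    hence "((v \<otimes> u)\<otimes>x, (v\<otimes>u)\<otimes>y) \<in> H" using a Tc by (simp add: m_assoc)
    thus "(x,y) \<in> sat H" using satI a v T_mult by blast
  qed
  have "sat H \<subseteq> carrier B \<times> carrier B" unfolding sat_def by auto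
  thus ?thesis unfolding Qc_def lin_def using fn sm ad dom sd by blast
qed


lemma Qc_dom2: assumes F: "F \<in> Qc" and G: "G \<in> Qc" and x: "x \<in> carrier B"
  shows "\<exists>u\<in>T. (\<exists>y. (u\<otimes>x, y) \<in> F) \<and> (\<exists>z. (u\<otimes>x, z) \<in> G)"
proof -
  obtain u1 y1 where 1: "u1 \<in> T" "(u1 \<otimes> x, y1) \<in> F" using Qc_dom[OF F x] by blast
  obtain u2 z where 2: "u2 \<in> T" "(u2 \<otimes> (u1 \<otimes> x), z) \<in> G" using Qc_dom[OF G m_closed[OF Tc[OF 1(1)] x]] by blast
  have "(u2 \<otimes> (u1 \<otimes> x), u2 \<otimes> y1) \<in> F" using Qc_smult[OF F 1(2) Tc[OF 2(1)]] .
  hence "((u2 \<otimes> u1) \<otimes> x, u2 \<otimes> y1) \<in> F" "((u2 \<otimes> u1) \<otimes> x, z) \<in> G"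
    using 1 2 x Tc by (simp_all add: m_assoc)
  thus ?thesis using T_mult 1 2 by blast
qed

lemma Qc_common: assumes F: "F \<in> Qc" and G: "G \<in> Qc"
  shows "\<exists>t\<in>T. (\<exists>y. (t, y) \<in> F) \<and> (\<exists>z. (t, z) \<in> G)"
proof -
  obtain t0 y0 where 0: "t0 \<in> T" "(t0,y0) \<in> F" using Qc_dom0[OF F] by blast
  obtain u z where u: "u \<in> T" "(u\<otimes>t0, z) \<in> G" using Qc_dom[OF G Tc[OF 0(1)]] by blast
  have "(u\<otimes>t0, u\<otimes>y0) \<in> F" using Qc_smult[OF F 0(2) Tc[OF u(1)]] .
  thus ?thesis using u 0 T_mult by blast
qed

lemma Qc_common3: assumes F: "F \<in> Qc" and G: "G \<in> Qc" and K: "K \<in> Qc"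
  shows "\<exists>t\<in>T. \<exists>a b c. (t, a) \<in> F \<and> (t, b) \<in> G \<and> (t, c) \<in> K"
proof -
  obtain t0 y0 where 0: "t0 \<in> T" "(t0,y0) \<in> F" using Qc_dom0[OF F] by blast
  obtain u z w where u: "u \<in> T" "(u\<otimes>t0, z) \<in> G" "(u\<otimes>t0, w) \<in> K" using Qc_dom2[OF G K Tc[OF 0(1)]] by blast
  have "(u\<otimes>t0, u\<otimes>y0) \<in> F" using Qc_smult[OF F 0(2) Tc[OF u(1)]] .
  thus ?thesis using u 0 T_mult by blast
qed

lemma Qc_chain2: assumes F: "F \<in> Qc" and G: "G \<in> Qc"
  shows "\<exists>t\<in>T. \<exists>a b. (t, a) \<in> F \<and> (a, b) \<in> G"
proof -
  obtain t0 y0 where 0: "t0 \<in> T" "(t0,y0) \<in> F" using Qc_dom0[OF F] by blast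
  obtain u z where u: "u \<in> T" "(u\<otimes>y0, z) \<in> G" using Qc_dom[OF G] Qc_carr[OF F 0(2)] by blast
  have "(u\<otimes>t0, u\<otimes>y0) \<in> F" using Qc_smult[OF F 0(2) Tc[OF u(1)]] .
  thus ?thesis using u 0 T_mult by blast
qed

lemma Qc_chain3: assumes F: "F \<in> Qc" and G: "G \<in> Qc" and K: "K \<in> Qc"
  shows "\<exists>t\<in>T. \<exists>a b c. (t, a) \<in> F \<and> (a, b) \<in> G \<and> (b, c) \<in> K"
proof -
  obtain t0 a0 b0 where 0: "t0 \<in> T" "(t0,a0) \<in> F" "(a0,b0) \<in> G" using Qc_chain2[OF F G] by blast
  obtain u c where u: "u \<in> T" "(u\<otimes>b0, c) \<in> K" using Qc_dom[OF K] Qc_carr[OF G 0(3)] by blast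
  have "(u\<otimes>t0, u\<otimes>a0) \<in> F" "(u\<otimes>a0, u\<otimes>b0) \<in> G"
    using Qc_smult[OF F 0(2) Tc[OF u(1)]] Qc_smult[OF G 0(3) Tc[OF u(1)]] .
  thus ?thesis using u 0 T_mult by blast
qed

lemma lin_add: assumes F: "F \<in> Qc" and G: "G \<in> Qc"
  shows "lin {(x, y \<oplus> z) | x y z. (x,y)\<in>F \<and> (x,z)\<in>G}" (is "lin ?H")
proof -
  have c: "?H \<subseteq> carrier B \<times> carrier B" using Qc_carr[OF F] Qc_carr[OF G] by blast
  have f: "\<forall>x y y'. (x,y)\<in>?H \<longrightarrow> (x,y')\<in>?H \<longrightarrow> y = y'" using Qc_fun[OF F] Qc_fun[OF G] by blast
  have s: "\<forall>x y c. (x,y)\<in>?H \<longrightarrow> c \<in> carrier B \<longrightarrow> (c\<otimes>x, c\<otimes>y)\<in>?H"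
  proof (intro allI impI)
    fix x w c assume "(x,w) \<in> ?H" "c \<in> carrier B"
    then obtain y z where yz: "w = y \<oplus> z" "(x,y)\<in>F" "(x,z)\<in>G" by blast
    have "c \<otimes> w = c\<otimes>y \<oplus> c\<otimes>z" using yz Qc_carr[OF F yz(2)] Qc_carr[OF G yz(3)] \<open>c \<in> carrier B\<close> by (simp add: r_distr)
    thus "(c\<otimes>x, c\<otimes>w)\<in>?H" using Qc_smult[OF F yz(2)] Qc_smult[OF G yz(3)] \<open>c \<in> carrier B\<close> by blast
  qed
  have a: "\<forall>x y x' y'. (x,y)\<in>?H \<longrightarrow> (x',y')\<in>?H \<longrightarrow> (x\<oplus>x', y\<oplus>y')\<in>?H"
  proof (intro allI impI)
    fix x w x' w' assume "(x,w) \<in> ?H" "(x',w') \<in> ?H"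
    then obtain y z y' z' where yz: "w = y \<oplus> z" "(x,y)\<in>F" "(x,z)\<in>G" "w' = y' \<oplus> z'" "(x',y')\<in>F" "(x',z')\<in>G" by blast
    have "w \<oplus> w' = (y \<oplus> y') \<oplus> (z \<oplus> z')" using yz Qc_carr[OF F yz(2)] Qc_carr[OF G yz(3)]
      Qc_carr[OF F yz(5)] Qc_carr[OF G yz(6)] by (simp add: a_ac)
    thus "(x\<oplus>x', w\<oplus>w')\<in>?H" using Qc_add[OF F yz(2,5)] Qc_add[OF G yz(3,6)] by blast
  qed
  have d: "\<exists>t\<in>T. \<exists>y. (t,y)\<in>?H" using Qc_common[OF F G] by blast
  show ?thesis unfolding lin_def using c f s a d by blast
qed

lemma lin_mult: assumes F: "F \<in> Qc" and G: "G \<in> Qc" shows "lin (F O G)"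
proof -
  have c: "F O G \<subseteq> carrier B \<times> carrier B" using Qc_carr[OF F] Qc_carr[OF G] by blast
  have f: "\<forall>x y y'. (x,y)\<in>F O G \<longrightarrow> (x,y')\<in>F O G \<longrightarrow> y = y'"
  proof (intro allI impI)
    fix x y y' assume "(x,y)\<in>F O G" "(x,y')\<in>F O G"
    then obtain a a' where "(x,a) \<in> F" "(a,y) \<in> G" "(x,a') \<in> F" "(a',y') \<in> G" by blast
    thus "y = y'" using Qc_fun[OF F] Qc_fun[OF G] by metis
  qed
  have s: "\<forall>x y c. (x,y)\<in>F O G \<longrightarrow> c \<in> carrier B \<longrightarrow> (c\<otimes>x, c\<otimes>y)\<in>F O G"
  proof (intro allI impI)
    fix x y c assume "(x,y)\<in>F O G" "c \<in> carrier B"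
    then obtain a where "(x,a) \<in> F" "(a,y) \<in> G" by blast
    thus "(c\<otimes>x, c\<otimes>y)\<in>F O G" using Qc_smult[OF F _ \<open>c \<in> carrier B\<close>] Qc_smult[OF G _ \<open>c \<in> carrier B\<close>] by (meson relcomp.relcompI)
  qed
  have a: "\<forall>x y x' y'. (x,y)\<in>F O G \<longrightarrow> (x',y')\<in>F O G \<longrightarrow> (x\<oplus>x', y\<oplus>y')\<in>F O G"
  proof (intro allI impI)
    fix x y x' y' assume "(x,y)\<in>F O G" "(x',y')\<in>F O G"
    then obtain a a' where "(x,a) \<in> F" "(a,y) \<in> G" "(x',a') \<in> F" "(a',y') \<in> G" by blast
    thus "(x\<oplus>x', y\<oplus>y')\<in>F O G" using Qc_add[OF F] Qc_add[OF G] by (meson relcomp.relcompI)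
  qed
  have d: "\<exists>t\<in>T. \<exists>y. (t,y)\<in>F O G" using Qc_chain2[OF F G] by blast
  show ?thesis unfolding lin_def using c f s a d by blast
qed

lemma lin_carr: "lin H \<Longrightarrow> H \<subseteq> carrier B \<times> carrier B" unfolding lin_def by (elim conjE)

lemma qadd_Qc: "F \<in> Qc \<Longrightarrow> G \<in> Qc \<Longrightarrow> qadd F G \<in> Qc"
  unfolding qadd_def using sat_Qc lin_add by blast
lemma qmult_Qc: "F \<in> Qc \<Longrightarrow> G \<in> Qc \<Longrightarrow> qmult F G \<in> Qc"
  unfolding qmult_def using sat_Qc lin_mult by blast

lemma qadd_mem: assumes "F \<in> Qc" "G \<in> Qc" "(x,y) \<in> F" "(x,z) \<in> G" shows "(x, y \<oplus> z) \<in> qadd F G"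
proof -
  have "(x, y \<oplus> z) \<in> {(x, y \<oplus> z) | x y z. (x,y)\<in>F \<and> (x,z)\<in>G}" using assms by blast
  thus ?thesis unfolding qadd_def using sat_sub[OF lin_carr[OF lin_add[OF assms(1,2)]]] by blast
qed

lemma qmult_mem: assumes "F \<in> Qc" "G \<in> Qc" "(x,y) \<in> F" "(y,z) \<in> G" shows "(x, z) \<in> qmult F G"
proof -
  have "(x, z) \<in> F O G" using assms by blast
  thus ?thesis unfolding qmult_def using sat_sub[OF lin_carr[OF lin_mult[OF assms(1,2)]]] by blast
qed

lemma zero_Qc: "carrier B \<times> {\<zero>} \<in> Qc"
  unfolding Qc_def lin_def satd_def using T_one T_regl by auto

lemma one_Qc: "Id_on (carrier B) \<in> Qc"
  unfolding Qc_def lin_def satd_def using T_one T_cancel by auto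

lemma neg_Qc: assumes F: "F \<in> Qc" shows "sat {(x, \<ominus> y) | x y. (x,y) \<in> F} \<in> Qc" (is "sat ?H \<in> Qc")
  and "(x,y) \<in> F \<Longrightarrow> (x, \<ominus> y) \<in> sat {(x, \<ominus> y) | x y. (x,y) \<in> F}"
proof -
  have c: "?H \<subseteq> carrier B \<times> carrier B" using Qc_carr[OF F] by blast
  have f: "\<forall>x y y'. (x,y)\<in>?H \<longrightarrow> (x,y')\<in>?H \<longrightarrow> y = y'" using Qc_fun[OF F] by blast
  have s: "\<forall>x y c. (x,y)\<in>?H \<longrightarrow> c \<in> carrier B \<longrightarrow> (c\<otimes>x, c\<otimes>y)\<in>?H"
  proof (intro allI impI)
    fix x w c assume "(x,w) \<in> ?H" "c \<in> carrier B"
    then obtain y where y: "w = \<ominus> y" "(x,y)\<in>F" by blast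
    have "c \<otimes> w = \<ominus> (c \<otimes> y)" using y Qc_carr[OF F y(2)] \<open>c \<in> carrier B\<close> by (simp add: r_minus)
    thus "(c\<otimes>x, c\<otimes>w)\<in>?H" using Qc_smult[OF F y(2)] \<open>c \<in> carrier B\<close> by blast
  qed
  have a: "\<forall>x y x' y'. (x,y)\<in>?H \<longrightarrow> (x',y')\<in>?H \<longrightarrow> (x\<oplus>x', y\<oplus>y')\<in>?H"
  proof (intro allI impI)
    fix x w x' w' assume "(x,w) \<in> ?H" "(x',w') \<in> ?H"
    then obtain y y' where yz: "w = \<ominus> y" "(x,y)\<in>F" "w' = \<ominus> y'" "(x',y')\<in>F" by blast
    have "w \<oplus> w' = \<ominus> (y \<oplus> y')" using yz Qc_carr[OF F yz(2)] Qc_carr[OF F yz(4)] by (simp add: minus_add)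
    thus "(x\<oplus>x', w\<oplus>w')\<in>?H" using Qc_add[OF F yz(2,4)] by blast
  qed
  have d: "\<exists>t\<in>T. \<exists>y. (t,y)\<in>?H" using Qc_dom0[OF F] by blast
  have "lin ?H" unfolding lin_def using c f s a d by blast
  thus "sat ?H \<in> Qc" by (rule sat_Qc)
  show "(x,y) \<in> F \<Longrightarrow> (x, \<ominus> y) \<in> sat ?H" using sat_sub[OF c] by blast
qed

lemma zero_mem: "x \<in> carrier B \<Longrightarrow> (x, \<zero>) \<in> carrier B \<times> {\<zero>}" by simp

lemma ring_Q: "ring Q"
proof (rule ringI)
  show "abelian_group Q"
  proof (rule abelian_groupI, unfold Q_def, simp_all)
    show "\<And>x y. x \<in> Qc \<Longrightarrow> y \<in> Qc \<Longrightarrow> qadd x y \<in> Qc" by (rule qadd_Qc)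
    show "carrier B \<times> {\<zero>} \<in> Qc" by (rule zero_Qc)
    show "qadd (qadd F G) K = qadd F (qadd G K)" if FGK: "F \<in> Qc" "G \<in> Qc" "K \<in> Qc" for F G K
    proof -
      obtain t a b c where t: "t \<in> T" "(t,a) \<in> F" "(t,b) \<in> G" "(t,c) \<in> K" using Qc_common3[OF FGK] by blast
      have cc: "a \<in> carrier B" "b \<in> carrier B" "c \<in> carrier B"
        using Qc_carr[OF FGK(1) t(2)] Qc_carr[OF FGK(2) t(3)] Qc_carr[OF FGK(3) t(4)] by auto
      have 1: "(t, (a \<oplus> b) \<oplus> c) \<in> qadd (qadd F G) K"
        using qadd_mem[OF qadd_Qc[OF FGK(1,2)] FGK(3) qadd_mem[OF FGK(1,2) t(2,3)] t(4)] .
      have 2: "(t, a \<oplus> (b \<oplus> c)) \<in> qadd F (qadd G K)"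
        using qadd_mem[OF FGK(1) qadd_Qc[OF FGK(2,3)] t(2) qadd_mem[OF FGK(2,3) t(3,4)]] .
      have 3: "(t, (a \<oplus> b) \<oplus> c) \<in> qadd F (qadd G K)" using 2 cc by (simp add: a_assoc)
      show ?thesis by (rule Qc_ext[OF qadd_Qc[OF qadd_Qc[OF FGK(1,2)] FGK(3)] qadd_Qc[OF FGK(1) qadd_Qc[OF FGK(2,3)]] t(1) 1 3])
    qed
    show "qadd F G = qadd G F" if FG: "F \<in> Qc" "G \<in> Qc" for F G
    proof -
      obtain t a b where t: "t \<in> T" "(t,a) \<in> F" "(t,b) \<in> G" using Qc_common[OF FG] by blast
      have cc: "a \<in> carrier B" "b \<in> carrier B" using Qc_carr[OF FG(1) t(2)] Qc_carr[OF FG(2) t(3)] by auto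
      have 1: "(t, a \<oplus> b) \<in> qadd F G" using qadd_mem[OF FG t(2,3)] .
      have 2: "(t, b \<oplus> a) \<in> qadd G F" using qadd_mem[OF FG(2,1) t(3,2)] .
      have 3: "(t, a \<oplus> b) \<in> qadd G F" using 2 cc by (simp add: a_comm)
      show ?thesis by (rule Qc_ext[OF qadd_Qc[OF FG] qadd_Qc[OF FG(2,1)] t(1) 1 3])
    qed
    show "qadd (carrier B \<times> {\<zero>}) F = F" if F: "F \<in> Qc" for F
    proof -
      obtain t a where t: "t \<in> T" "(t,a) \<in> F" using Qc_dom0[OF F] by blast
      have cc: "a \<in> carrier B" using Qc_carr[OF F t(2)] by auto
      have 1: "(t, \<zero> \<oplus> a) \<in> qadd (carrier B \<times> {\<zero>}) F" using qadd_mem[OF zero_Qc F zero_mem[OF Tc[OF t(1)]] t(2)] .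
      have 2: "(t, a) \<in> qadd (carrier B \<times> {\<zero>}) F" using 1 cc by simp
      show ?thesis by (rule Qc_ext[OF qadd_Qc[OF zero_Qc F] F t(1) 2 t(2)])
    qed
    show "\<exists>y\<in>Qc. qadd y F = carrier B \<times> {\<zero>}" if F: "F \<in> Qc" for F
    proof -
      obtain t a where t: "t \<in> T" "(t,a) \<in> F" using Qc_dom0[OF F] by blast
      have cc: "a \<in> carrier B" using Qc_carr[OF F t(2)] by auto
      note N = neg_Qc[OF F]
      have 1: "(t, \<ominus> a \<oplus> a) \<in> qadd (sat {(x, \<ominus> y) | x y. (x,y) \<in> F}) F" using qadd_mem[OF N(1) F N(2)[OF t(2)] t(2)] .
      have 2: "(t, \<zero>) \<in> qadd (sat {(x, \<ominus> y) | x y. (x,y) \<in> F}) F" using 1 cc by (simp add: l_neg)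
      have 3: "(t, \<zero>) \<in> carrier B \<times> {\<zero>}" using Tc[OF t(1)] by simp
      show ?thesis using Qc_ext[OF qadd_Qc[OF N(1) F] zero_Qc t(1) 2 3] N(1) by blast
    qed
  qed
  show "monoid Q"
  proof (rule monoidI, unfold Q_def, simp_all)
    show "\<And>x y. x \<in> Qc \<Longrightarrow> y \<in> Qc \<Longrightarrow> qmult x y \<in> Qc" by (rule qmult_Qc)
    show "Id_on (carrier B) \<in> Qc" by (rule one_Qc)
    show "qmult (qmult F G) K = qmult F (qmult G K)" if FGK: "F \<in> Qc" "G \<in> Qc" "K \<in> Qc" for F G K
    proof -
      obtain t a b c where t: "t \<in> T" "(t,a) \<in> F" "(a,b) \<in> G" "(b,c) \<in> K" using Qc_chain3[OF FGK] by blast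
      have 1: "(t, c) \<in> qmult (qmult F G) K"
        using qmult_mem[OF qmult_Qc[OF FGK(1,2)] FGK(3) qmult_mem[OF FGK(1,2) t(2,3)] t(4)] .
      have 2: "(t, c) \<in> qmult F (qmult G K)"
        using qmult_mem[OF FGK(1) qmult_Qc[OF FGK(2,3)] t(2) qmult_mem[OF FGK(2,3) t(3,4)]] .
      show ?thesis by (rule Qc_ext[OF qmult_Qc[OF qmult_Qc[OF FGK(1,2)] FGK(3)] qmult_Qc[OF FGK(1) qmult_Qc[OF FGK(2,3)]] t(1) 1 2])
    qed
    show "qmult (Id_on (carrier B)) F = F" if F: "F \<in> Qc" for F
    proof -
      obtain t a where t: "t \<in> T" "(t,a) \<in> F" using Qc_dom0[OF F] by blast
      have i: "(t,t) \<in> Id_on (carrier B)" using Tc[OF t(1)] by auto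
      have 1: "(t, a) \<in> qmult (Id_on (carrier B)) F" using qmult_mem[OF one_Qc F i t(2)] .
      show ?thesis by (rule Qc_ext[OF qmult_Qc[OF one_Qc F] F t(1) 1 t(2)])
    qed
    show "qmult F (Id_on (carrier B)) = F" if F: "F \<in> Qc" for F
    proof -
      obtain t a where t: "t \<in> T" "(t,a) \<in> F" using Qc_dom0[OF F] by blast
      have i: "(a,a) \<in> Id_on (carrier B)" using Qc_carr[OF F t(2)] by auto
      have 1: "(t, a) \<in> qmult F (Id_on (carrier B))" using qmult_mem[OF F one_Qc t(2) i] .
      show ?thesis by (rule Qc_ext[OF qmult_Qc[OF F one_Qc] F t(1) 1 t(2)])
    qed
  qed
  show "\<And>F G K. F \<in> carrier Q \<Longrightarrow> G \<in> carrier Q \<Longrightarrow> K \<in> carrier Q \<Longrightarrow> (F \<oplus>\<^bsub>Q\<^esub> G) \<otimes>\<^bsub>Q\<^esub> K = F \<otimes>\<^bsub>Q\<^esub> K \<oplus>\<^bsub>Q\<^esub> G \<otimes>\<^bsub>Q\<^esub> K"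
  proof (unfold Q_def, simp)
    fix F G K assume FGK: "F \<in> Qc" "G \<in> Qc" "K \<in> Qc"
    obtain t0 a0 b0 where 0: "t0 \<in> T" "(t0,a0) \<in> F" "(t0,b0) \<in> G" using Qc_common[OF FGK(1,2)] by blast
    have c0: "a0 \<in> carrier B" "b0 \<in> carrier B" using Qc_carr[OF FGK(1) 0(2)] Qc_carr[OF FGK(2) 0(3)] by auto
    obtain u1 c1 where 1: "u1 \<in> T" "(u1 \<otimes> a0, c1) \<in> K" using Qc_dom[OF FGK(3) c0(1)] by blast
    obtain u2 d where 2: "u2 \<in> T" "(u2 \<otimes> (u1 \<otimes> b0), d) \<in> K" using Qc_dom[OF FGK(3) m_closed[OF Tc[OF 1(1)] c0(2)]] by blast
    define t where "t = (u2 \<otimes> u1) \<otimes> t0"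
    define a where "a = (u2 \<otimes> u1) \<otimes> a0"
    define b where "b = (u2 \<otimes> u1) \<otimes> b0"
    define c where "c = u2 \<otimes> c1"
    have tT: "t \<in> T" unfolding t_def using T_mult 0 1 2 by blast
    have uc: "u2 \<otimes> u1 \<in> carrier B" using Tc[OF 1(1)] Tc[OF 2(1)] by blast
    have ta: "(t, a) \<in> F" "(t,b) \<in> G" unfolding t_def a_def b_def
      using Qc_smult[OF FGK(1) 0(2) uc] Qc_smult[OF FGK(2) 0(3) uc] .
    have "(u2 \<otimes> (u1 \<otimes> a0), u2 \<otimes> c1) \<in> K" using Qc_smult[OF FGK(3) 1(2) Tc[OF 2(1)]] .
    hence ac: "(a, c) \<in> K" unfolding a_def c_def using Tc[OF 1(1)] Tc[OF 2(1)] c0 by (simp add: m_assoc)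
    have bd: "(b, d) \<in> K" unfolding b_def using 2(2) Tc[OF 1(1)] Tc[OF 2(1)] c0 by (simp add: m_assoc)
    have L: "(t, c \<oplus> d) \<in> qmult (qadd F G) K"
      using qmult_mem[OF qadd_Qc[OF FGK(1,2)] FGK(3) qadd_mem[OF FGK(1,2) ta] Qc_add[OF FGK(3) ac bd]] .
    have R: "(t, c \<oplus> d) \<in> qadd (qmult F K) (qmult G K)"
      using qadd_mem[OF qmult_Qc[OF FGK(1,3)] qmult_Qc[OF FGK(2,3)] qmult_mem[OF FGK(1,3) ta(1) ac] qmult_mem[OF FGK(2,3) ta(2) bd]] .
    show "qmult (qadd F G) K = qadd (qmult F K) (qmult G K)"
      by (rule Qc_ext[OF qmult_Qc[OF qadd_Qc[OF FGK(1,2)] FGK(3)] qadd_Qc[OF qmult_Qc[OF FGK(1,3)] qmult_Qc[OF FGK(2,3)]] tT L R])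
  qed
  show "\<And>F G K. F \<in> carrier Q \<Longrightarrow> G \<in> carrier Q \<Longrightarrow> K \<in> carrier Q \<Longrightarrow> K \<otimes>\<^bsub>Q\<^esub> (F \<oplus>\<^bsub>Q\<^esub> G) = K \<otimes>\<^bsub>Q\<^esub> F \<oplus>\<^bsub>Q\<^esub> K \<otimes>\<^bsub>Q\<^esub> G"
  proof (unfold Q_def, simp)
    fix F G K assume FGK: "F \<in> Qc" "G \<in> Qc" "K \<in> Qc"
    obtain t0 a0 where 0: "t0 \<in> T" "(t0,a0) \<in> K" using Qc_dom0[OF FGK(3)] by blast
    have c0: "a0 \<in> carrier B" using Qc_carr[OF FGK(3) 0(2)] by auto
    obtain u b c where 1: "u \<in> T" "(u \<otimes> a0, b) \<in> F" "(u \<otimes> a0, c) \<in> G" using Qc_dom2[OF FGK(1,2) c0] by blast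
    have tT: "u \<otimes> t0 \<in> T" using T_mult 0 1 by blast
    have ta: "(u \<otimes> t0, u \<otimes> a0) \<in> K" using Qc_smult[OF FGK(3) 0(2) Tc[OF 1(1)]] .
    have L: "(u \<otimes> t0, b \<oplus> c) \<in> qmult K (qadd F G)"
      using qmult_mem[OF FGK(3) qadd_Qc[OF FGK(1,2)] ta qadd_mem[OF FGK(1,2) 1(2,3)]] .
    have R: "(u \<otimes> t0, b \<oplus> c) \<in> qadd (qmult K F) (qmult K G)"
      using qadd_mem[OF qmult_Qc[OF FGK(3,1)] qmult_Qc[OF FGK(3,2)] qmult_mem[OF FGK(3,1) ta 1(2)] qmult_mem[OF FGK(3,2) ta 1(3)]] .
    show "qmult K (qadd F G) = qadd (qmult K F) (qmult K G)"
      by (rule Qc_ext[OF qmult_Qc[OF FGK(3) qadd_Qc[OF FGK(1,2)]] qadd_Qc[OF qmult_Qc[OF FGK(3,1)] qmult_Qc[OF FGK(3,2)]] tT L R])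
  qed
qed

lemma Q_simps [simp]: "carrier Q = Qc" "monoid.mult Q = qmult" "ring.add Q = qadd" "monoid.one Q = Id_on (carrier B)"
  "ring.zero Q = carrier B \<times> {\<zero>}" by (simp_all add: Q_def)

definition phi :: "'a \<Rightarrow> ('a \<times> 'a) set" where "phi b = {(x, x \<otimes> b) | x. x \<in> carrier B}"
definition psi :: "'a \<Rightarrow> ('a \<times> 'a) set" where "psi t = {(x,y). x \<in> carrier B \<and> y \<in> carrier B \<and> y \<otimes> t = x}"

lemma T_rcancel: assumes "t \<in> T" "x \<in> carrier B" "y \<in> carrier B" "x \<otimes> t = y \<otimes> t" shows "x = y"
proof -
  have "(x \<ominus> y) \<otimes> t = \<zero>" using assms Tc[OF assms(1)]
    by (simp add: l_distr minus_eq l_minus r_neg)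
  hence "x \<ominus> y = \<zero>" using T_regr assms by auto
  thus ?thesis using assms by (metis minus_equality add.inv_closed a_minus_def r_neg add.inv_inv)
qed

lemma phi_mem: "x \<in> carrier B \<Longrightarrow> (x, x \<otimes> b) \<in> phi b" unfolding phi_def by blast

lemma phi_Qc: assumes b: "b \<in> carrier B" shows "phi b \<in> Qc"
proof -
  have c: "phi b \<subseteq> carrier B \<times> carrier B" unfolding phi_def using b by auto
  have f: "\<forall>x y y'. (x,y)\<in>phi b \<longrightarrow> (x,y')\<in>phi b \<longrightarrow> y = y'" unfolding phi_def by blast
  have s: "\<forall>x y c. (x,y)\<in>phi b \<longrightarrow> c \<in> carrier B \<longrightarrow> (c\<otimes>x, c\<otimes>y)\<in>phi b"
    unfolding phi_def using b by (auto simp: m_assoc)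
  have a: "\<forall>x y x' y'. (x,y)\<in>phi b \<longrightarrow> (x',y')\<in>phi b \<longrightarrow> (x\<oplus>x', y\<oplus>y')\<in>phi b"
    unfolding phi_def using b by (auto simp: l_distr)
  have d: "\<exists>t\<in>T. \<exists>y. (t,y)\<in>phi b" using T_one phi_mem by blast
  have sd: "satd (phi b)" unfolding satd_def
  proof (intro ballI impI)
    fix u x y assume a: "u \<in> T" "x \<in> carrier B" "y \<in> carrier B" "(u\<otimes>x, u\<otimes>y) \<in> phi b"
    hence "u \<otimes> y = u \<otimes> (x \<otimes> b)" unfolding phi_def using b Tc by (auto simp: m_assoc)
    hence "y = x \<otimes> b" using T_cancel a b by blast
    thus "(x,y) \<in> phi b" using phi_mem a by simp
  qed
  show ?thesis unfolding Qc_def lin_def using c f s a d sd by blast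
qed

lemma psi_mem: "y \<in> carrier B \<Longrightarrow> t \<in> T \<Longrightarrow> (y \<otimes> t, y) \<in> psi t" unfolding psi_def using Tc by blast

lemma psi_Qc: assumes t: "t \<in> T" shows "psi t \<in> Qc"
proof -
  have tc: "t \<in> carrier B" using Tc t .
  have c: "psi t \<subseteq> carrier B \<times> carrier B" unfolding psi_def by auto
  have f: "\<forall>x y y'. (x,y)\<in>psi t \<longrightarrow> (x,y')\<in>psi t \<longrightarrow> y = y'" unfolding psi_def using T_rcancel t by auto
  have s: "\<forall>x y c. (x,y)\<in>psi t \<longrightarrow> c \<in> carrier B \<longrightarrow> (c\<otimes>x, c\<otimes>y)\<in>psi t"
    unfolding psi_def using tc by (auto simp: m_assoc)
  have a: "\<forall>x y x' y'. (x,y)\<in>psi t \<longrightarrow> (x',y')\<in>psi t \<longrightarrow> (x\<oplus>x', y\<oplus>y')\<in>psi t"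
    unfolding psi_def using tc by (auto simp: l_distr)
  have d: "\<exists>t'\<in>T. \<exists>y. (t',y)\<in>psi t" using t psi_mem[of \<one> t] tc by auto
  have sd: "satd (psi t)" unfolding satd_def
  proof (intro ballI impI)
    fix u x y assume a: "u \<in> T" "x \<in> carrier B" "y \<in> carrier B" "(u\<otimes>x, u\<otimes>y) \<in> psi t"
    hence "u \<otimes> (y \<otimes> t) = u \<otimes> x" unfolding psi_def using tc Tc by (auto simp: m_assoc)
    hence "y \<otimes> t = x" using T_cancel a tc by blast
    thus "(x,y) \<in> psi t" unfolding psi_def using a by simp
  qed
  show ?thesis unfolding Qc_def lin_def using c f s a d sd by blast
qed

lemma phi_hom: "phi \<in> ring_hom B Q"
proof (rule ring_hom_memI)
  show "\<And>x. x \<in> carrier B \<Longrightarrow> phi x \<in> carrier Q" using phi_Qc by simp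
  show "phi (x \<otimes> y) = phi x \<otimes>\<^bsub>Q\<^esub> phi y" if xy: "x \<in> carrier B" "y \<in> carrier B" for x y
  proof -
    have 1: "(\<one>, x \<otimes> y) \<in> phi (x \<otimes> y)" using phi_mem[of \<one> "x \<otimes> y"] xy by simp
    have a: "(\<one>, x) \<in> phi x" using phi_mem[of \<one> x] xy by simp
    have b: "(x, x \<otimes> y) \<in> phi y" using phi_mem[of x y] xy by simp
    have 2: "(\<one>, x \<otimes> y) \<in> qmult (phi x) (phi y)" using qmult_mem[OF phi_Qc[OF xy(1)] phi_Qc[OF xy(2)] a b] .
    show ?thesis using Qc_ext[OF phi_Qc qmult_Qc[OF phi_Qc[OF xy(1)] phi_Qc[OF xy(2)]] T_one 1 2] xy by simp
  qed
  show "phi (x \<oplus> y) = phi x \<oplus>\<^bsub>Q\<^esub> phi y" if xy: "x \<in> carrier B" "y \<in> carrier B" for x y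
  proof -
    have 1: "(\<one>, x \<oplus> y) \<in> phi (x \<oplus> y)" using phi_mem[of \<one> "x \<oplus> y"] xy by simp
    have a: "(\<one>, x) \<in> phi x" using phi_mem[of \<one> x] xy by simp
    have b: "(\<one>, y) \<in> phi y" using phi_mem[of \<one> y] xy by simp
    have 2: "(\<one>, x \<oplus> y) \<in> qadd (phi x) (phi y)" using qadd_mem[OF phi_Qc[OF xy(1)] phi_Qc[OF xy(2)] a b] .
    show ?thesis using Qc_ext[OF phi_Qc qadd_Qc[OF phi_Qc[OF xy(1)] phi_Qc[OF xy(2)]] T_one 1 2] xy by simp
  qed
  show "phi \<one> = \<one>\<^bsub>Q\<^esub>"
  proof -
    have 1: "(\<one>, \<one> \<otimes> \<one>) \<in> phi \<one>" by (rule phi_mem) simp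
    have 2: "(\<one>, \<one> \<otimes> \<one>) \<in> Id_on (carrier B)" using Id_onI[of \<one> "carrier B"] by simp
    show ?thesis using Qc_ext[OF phi_Qc one_Qc T_one 1 2] by simp
  qed
qed

lemma phi_psi: assumes t: "t \<in> T" shows "qmult (phi t) (psi t) = Id_on (carrier B)"
  "qmult (psi t) (phi t) = Id_on (carrier B)"
proof -
  have tc: "t \<in> carrier B" using Tc t .
  have a: "(\<one>, t) \<in> phi t" using phi_mem[of \<one> t] tc by simp
  have b: "(t, \<one>) \<in> psi t" using psi_mem[of \<one> t] tc t by simp
  have 1: "(\<one>, \<one>) \<in> qmult (phi t) (psi t)" using qmult_mem[OF phi_Qc[OF tc] psi_Qc[OF t] a b] .
  show "qmult (phi t) (psi t) = Id_on (carrier B)"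
    by (rule Qc_ext[OF qmult_Qc[OF phi_Qc[OF tc] psi_Qc[OF t]] one_Qc T_one 1]) (auto simp: Id_on_def)
  have 2: "(t, t) \<in> qmult (psi t) (phi t)" using qmult_mem[OF psi_Qc[OF t] phi_Qc[OF tc] b a] .
  show "qmult (psi t) (phi t) = Id_on (carrier B)"
    by (rule Qc_ext[OF qmult_Qc[OF psi_Qc[OF t] phi_Qc[OF tc]] one_Qc t 2]) (auto simp: tc Id_on_def)
qed

lemma phi_unit: "t \<in> T \<Longrightarrow> phi t \<in> Units Q"
  unfolding Units_def using phi_psi[of t] phi_Qc psi_Qc Tc by (auto intro!: bexI[of _ "psi t"])

lemma phi_inv: "t \<in> T \<Longrightarrow> inv\<^bsub>Q\<^esub> (phi t) = psi t"
  using monoid.inv_char[OF ring.is_monoid[OF ring_Q], of "phi t" "psi t"] phi_psi[of t] phi_Qc psi_Qc Tc by auto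

lemma Qc_repr: assumes F: "F \<in> Qc" and t: "t \<in> T" "(t,b) \<in> F" shows "F = qmult (psi t) (phi b)"
proof -
  have bc: "b \<in> carrier B" using Qc_carr[OF F t(2)] by auto
  have 1: "(t, \<one>) \<in> psi t" using psi_mem[of \<one> t] Tc t by simp
  have 2: "(\<one>, b) \<in> phi b" using phi_mem[of \<one> b] bc by simp
  show ?thesis by (rule Qc_ext[OF F qmult_Qc[OF psi_Qc[OF t(1)] phi_Qc[OF bc]] t(1) t(2) qmult_mem[OF psi_Qc[OF t(1)] phi_Qc[OF bc] 1 2]])
qed

lemma phi_times: assumes F: "F \<in> Qc" and t: "t \<in> T" "(t,b) \<in> F" shows "qmult (phi t) F = phi b"
proof -
  have bc: "b \<in> carrier B" using Qc_carr[OF F t(2)] by auto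
  have 1: "(\<one>, t) \<in> phi t" using phi_mem[of \<one> t] Tc t by simp
  have 2: "(\<one>, \<one> \<otimes> b) \<in> phi b" using phi_mem[of \<one> b] bc by simp
  have 3: "(\<one>, \<one> \<otimes> b) \<in> qmult (phi t) F" using qmult_mem[OF phi_Qc[OF Tc[OF t(1)]] F 1 t(2)] bc by simp
  show ?thesis by (rule Qc_ext[OF qmult_Qc[OF phi_Qc[OF Tc[OF t(1)]] F] phi_Qc[OF bc] T_one 3 2])
qed

lemma phi_loc: "left_localization B T Q phi"
proof -
  have k: "{b \<in> carrier B. phi b = \<zero>\<^bsub>Q\<^esub>} = ass_l T B"
  proof -
    have "phi b = \<zero>\<^bsub>Q\<^esub> \<longleftrightarrow> b = \<zero>" if "b \<in> carrier B" for b
    proof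
      assume "phi b = \<zero>\<^bsub>Q\<^esub>"
      hence "(\<one>, \<one> \<otimes> b) \<in> carrier B \<times> {\<zero>}" using phi_mem[of \<one> b] by simp
      thus "b = \<zero>" using that by simp
    next
      assume "b = \<zero>"
      thus "phi b = \<zero>\<^bsub>Q\<^esub>" unfolding phi_def by auto
    qed
    moreover have "ass_l T B = {\<zero>}"
    proof
      show "ass_l T B \<subseteq> {\<zero>}" using T_regl by (auto simp: ass_l_def)
      show "{\<zero>} \<subseteq> ass_l T B" using T_one by (auto simp: ass_l_def intro!: bexI[of _ "\<one>"])
    qed
    ultimately show ?thesis by auto
  qed
  have r: "\<forall>q\<in>carrier Q. \<exists>t\<in>T. \<exists>b\<in>carrier B. q = inv\<^bsub>Q\<^esub> (phi t) \<otimes>\<^bsub>Q\<^esub> phi b"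
  proof
    fix q assume "q \<in> carrier Q"
    hence q: "q \<in> Qc" by simp
    obtain t b where t: "t \<in> T" "(t,b) \<in> q" using Qc_dom0[OF q] by blast
    show "\<exists>t\<in>T. \<exists>b\<in>carrier B. q = inv\<^bsub>Q\<^esub> (phi t) \<otimes>\<^bsub>Q\<^esub> phi b"
    proof -
      have "q = inv\<^bsub>Q\<^esub> (phi t) \<otimes>\<^bsub>Q\<^esub> phi b" using Qc_repr[OF q t] phi_inv[OF t(1)] by simp
      thus ?thesis using t Qc_carr[OF q t(2)] by blast
    qed
  qed
  show ?thesis unfolding left_localization_def using ring_Q phi_hom phi_unit k r by blast
qed

lemma loc_universal:
  fixes Q' :: "('c, 'n) ring_scheme" and g
  assumes R': "ring Q'" and g: "g \<in> ring_hom B Q'" and gu: "\<forall>t\<in>T. g t \<in> Units Q'"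
  shows "\<exists>h. h \<in> ring_hom Q Q' \<and> (\<forall>b\<in>carrier B. g b = h (phi b)) \<and>
     (\<forall>h'. h' \<in> ring_hom Q Q' \<and> (\<forall>b\<in>carrier B. g b = h' (phi b)) \<longrightarrow> (\<forall>q\<in>carrier Q. h' q = h q))"
proof -
  interpret Q': ring Q' by fact
  have gc: "\<And>x. x \<in> carrier B \<Longrightarrow> g x \<in> carrier Q'" using ring_hom_closed[OF g] .
  have gm: "\<And>x y. x \<in> carrier B \<Longrightarrow> y \<in> carrier B \<Longrightarrow> g (x \<otimes> y) = g x \<otimes>\<^bsub>Q'\<^esub> g y" using ring_hom_mult[OF g] .
  have ga: "\<And>x y. x \<in> carrier B \<Longrightarrow> y \<in> carrier B \<Longrightarrow> g (x \<oplus> y) = g x \<oplus>\<^bsub>Q'\<^esub> g y" using ring_hom_add[OF g] .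
  have g1: "g \<one> = \<one>\<^bsub>Q'\<^esub>" using ring_hom_one[OF g] .
  have gU: "\<And>t. t \<in> T \<Longrightarrow> g t \<in> Units Q'" using gu by blast
  define P where "P F q \<longleftrightarrow> q \<in> carrier Q' \<and> (\<forall>x y. (x,y)\<in>F \<longrightarrow> g x \<otimes>\<^bsub>Q'\<^esub> q = g y)" for F q
  have Bu0: "q = inv\<^bsub>Q'\<^esub> (g t) \<otimes>\<^bsub>Q'\<^esub> g b"
    if "q \<in> carrier Q'" "t \<in> T" "b \<in> carrier B" "g t \<otimes>\<^bsub>Q'\<^esub> q = g b" for q t b
  proof -
    have "inv\<^bsub>Q'\<^esub> (g t) \<otimes>\<^bsub>Q'\<^esub> g b = inv\<^bsub>Q'\<^esub> (g t) \<otimes>\<^bsub>Q'\<^esub> (g t \<otimes>\<^bsub>Q'\<^esub> q)" using that by simp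
    also have "\<dots> = (inv\<^bsub>Q'\<^esub> (g t) \<otimes>\<^bsub>Q'\<^esub> g t) \<otimes>\<^bsub>Q'\<^esub> q"
      using that(1) gU[OF that(2)] by (intro Q'.m_assoc[symmetric]) (auto simp: Q'.Units_closed)
    also have "\<dots> = q" using that(1) gU[OF that(2)] Q'.Units_l_inv by simp
    finally show ?thesis by simp
  qed
  have A: "P F (inv\<^bsub>Q'\<^esub> (g t) \<otimes>\<^bsub>Q'\<^esub> g b)" if F: "F \<in> Qc" and t: "t \<in> T" "(t,b) \<in> F" for F t b
  proof -
    have tc: "t \<in> carrier B" and bc: "b \<in> carrier B" using Qc_carr[OF F t(2)] by auto
    have gtU: "g t \<in> Units Q'" using gU[OF t(1)] .
    define q0 where "q0 = inv\<^bsub>Q'\<^esub> (g t) \<otimes>\<^bsub>Q'\<^esub> g b"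
    have q0c: "q0 \<in> carrier Q'" unfolding q0_def using gtU gc bc by simp
    have "g x \<otimes>\<^bsub>Q'\<^esub> q0 = g y" if xy: "(x,y) \<in> F" for x y
    proof -
      have xc: "x \<in> carrier B" and yc: "y \<in> carrier B" using Qc_carr[OF F xy] by auto
      obtain u c where uc: "u \<in> T" "c \<in> carrier B" "u \<otimes> x = c \<otimes> t" using T_ore[OF xc t(1)] by blast
      have ucc: "u \<in> carrier B" using Tc[OF uc(1)] .
      have 1: "(c \<otimes> t, c \<otimes> b) \<in> F" using Qc_smult[OF F t(2) uc(2)] .
      have 2: "(u \<otimes> x, u \<otimes> y) \<in> F" using Qc_smult[OF F xy ucc] .
      have e: "u \<otimes> y = c \<otimes> b" using Qc_fun[OF F 2] 1 uc(3) by simp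
      have "g u \<otimes>\<^bsub>Q'\<^esub> (g x \<otimes>\<^bsub>Q'\<^esub> q0) = g (u \<otimes> x) \<otimes>\<^bsub>Q'\<^esub> q0"
        using gc ucc xc q0c gm by (simp add: Q'.m_assoc)
      also have "\<dots> = (g c \<otimes>\<^bsub>Q'\<^esub> g t) \<otimes>\<^bsub>Q'\<^esub> (inv\<^bsub>Q'\<^esub> (g t) \<otimes>\<^bsub>Q'\<^esub> g b)"
        unfolding q0_def using uc(3) gm uc tc by simp
      also have "\<dots> = g c \<otimes>\<^bsub>Q'\<^esub> g b"
      proof -
        have i: "inv\<^bsub>Q'\<^esub> (g t) \<in> carrier Q'" "g t \<in> carrier Q'" "g c \<in> carrier Q'" "g b \<in> carrier Q'"
          using gtU gc uc bc tc by auto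
        have "(g c \<otimes>\<^bsub>Q'\<^esub> g t) \<otimes>\<^bsub>Q'\<^esub> (inv\<^bsub>Q'\<^esub> (g t) \<otimes>\<^bsub>Q'\<^esub> g b)
            = g c \<otimes>\<^bsub>Q'\<^esub> ((g t \<otimes>\<^bsub>Q'\<^esub> inv\<^bsub>Q'\<^esub> (g t)) \<otimes>\<^bsub>Q'\<^esub> g b)"
          using i by (metis Q'.m_assoc Q'.m_closed)
        thus ?thesis using i Q'.Units_r_inv[OF gtU] by simp
      qed
      also have "\<dots> = g (c \<otimes> b)" using gm uc bc by simp
      also have "\<dots> = g u \<otimes>\<^bsub>Q'\<^esub> g y" using e[symmetric] gm[OF ucc yc] by simp
      finally have "g u \<otimes>\<^bsub>Q'\<^esub> (g x \<otimes>\<^bsub>Q'\<^esub> q0) = g u \<otimes>\<^bsub>Q'\<^esub> g y" .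
      thus ?thesis using gU[OF uc(1)] gc xc yc q0c by simp
    qed
    thus ?thesis unfolding P_def q0_def[symmetric] using q0c by blast
  qed
  have Bu: "q = inv\<^bsub>Q'\<^esub> (g t) \<otimes>\<^bsub>Q'\<^esub> g b" if "P F q" "t \<in> T" "(t,b) \<in> F" "F \<in> Qc" for F q t b
    using Bu0[of q t b] that Qc_carr[OF that(4,3)] unfolding P_def by blast
  define hh where "hh F = (THE q. P F q)" for F
  have hh: "hh F = inv\<^bsub>Q'\<^esub> (g t) \<otimes>\<^bsub>Q'\<^esub> g b" if "F \<in> Qc" "t \<in> T" "(t,b) \<in> F" for F t b
    unfolding hh_def using A[OF that] Bu[OF _ that(2,3,1)] by (rule the_equality)
  have hhP: "P F (hh F)" if "F \<in> Qc" for F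
    using Qc_dom0[OF that] hh[OF that] A[OF that] by metis
  have hhc: "hh F \<in> carrier Q'" if "F \<in> Qc" for F using hhP[OF that] unfolding P_def by blast
  have hom: "hh \<in> ring_hom Q Q'"
  proof (rule ring_hom_memI)
    show "\<And>x. x \<in> carrier Q \<Longrightarrow> hh x \<in> carrier Q'" using hhc by simp
    show "hh (F \<otimes>\<^bsub>Q\<^esub> G) = hh F \<otimes>\<^bsub>Q'\<^esub> hh G" if "F \<in> carrier Q" "G \<in> carrier Q" for F G
    proof -
      have FG: "F \<in> Qc" "G \<in> Qc" using that by auto
      obtain t a c where t: "t \<in> T" "(t,a) \<in> F" "(a,c) \<in> G" using Qc_chain2[OF FG] by blast
      have ac: "a \<in> carrier B" "c \<in> carrier B" using Qc_carr[OF FG(2) t(3)] by auto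
      have 1: "hh (qmult F G) = inv\<^bsub>Q'\<^esub> (g t) \<otimes>\<^bsub>Q'\<^esub> g c"
        using hh[OF qmult_Qc[OF FG] t(1) qmult_mem[OF FG t(2,3)]] .
      have 2: "g a \<otimes>\<^bsub>Q'\<^esub> hh G = g c" using hhP[OF FG(2)] t(3) unfolding P_def by blast
      have "hh F \<otimes>\<^bsub>Q'\<^esub> hh G = (inv\<^bsub>Q'\<^esub> (g t) \<otimes>\<^bsub>Q'\<^esub> g a) \<otimes>\<^bsub>Q'\<^esub> hh G" using hh[OF FG(1) t(1,2)] by simp
      also have "\<dots> = inv\<^bsub>Q'\<^esub> (g t) \<otimes>\<^bsub>Q'\<^esub> (g a \<otimes>\<^bsub>Q'\<^esub> hh G)"
        using gU[OF t(1)] gc ac hhc[OF FG(2)] by (simp add: Q'.m_assoc)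
      finally show ?thesis using 1 2 by simp
    qed
    show "hh (F \<oplus>\<^bsub>Q\<^esub> G) = hh F \<oplus>\<^bsub>Q'\<^esub> hh G" if "F \<in> carrier Q" "G \<in> carrier Q" for F G
    proof -
      have FG: "F \<in> Qc" "G \<in> Qc" using that by auto
      obtain t a b where t: "t \<in> T" "(t,a) \<in> F" "(t,b) \<in> G" using Qc_common[OF FG] by blast
      have ab: "a \<in> carrier B" "b \<in> carrier B" using Qc_carr[OF FG(1) t(2)] Qc_carr[OF FG(2) t(3)] by auto
      have 1: "hh (qadd F G) = inv\<^bsub>Q'\<^esub> (g t) \<otimes>\<^bsub>Q'\<^esub> g (a \<oplus> b)"
        using hh[OF qadd_Qc[OF FG] t(1) qadd_mem[OF FG t(2,3)]] .
      show ?thesis using 1 hh[OF FG(1) t(1,2)] hh[OF FG(2) t(1,3)] ga ab gc gU[OF t(1)]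
        by (simp add: Q'.r_distr)
    qed
    show "hh \<one>\<^bsub>Q\<^esub> = \<one>\<^bsub>Q'\<^esub>"
      using hh[OF one_Qc T_one, of \<one>] g1 by (simp add: Id_on_def)
  qed
  have hphi: "g b = hh (phi b)" if "b \<in> carrier B" for b
    using hh[OF phi_Qc[OF that] T_one, of b] phi_mem[of \<one> b] that g1 gc by simp
  have uq: "h' q = hh q" if "h' \<in> ring_hom Q Q'" "\<forall>b\<in>carrier B. g b = h' (phi b)" "q \<in> carrier Q" for h' q
  proof -
    have q: "q \<in> Qc" using that by simp
    obtain t b where t: "t \<in> T" "(t,b) \<in> q" using Qc_dom0[OF q] by blast
    have bc: "b \<in> carrier B" using Qc_carr[OF q t(2)] by auto
    have "h' (phi t \<otimes>\<^bsub>Q\<^esub> q) = h' (phi b)" using phi_times[OF q t] by simp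
    hence "g t \<otimes>\<^bsub>Q'\<^esub> h' q = g b"
      using ring_hom_mult[OF that(1), of "phi t" q] phi_Qc Tc[OF t(1)] q that(2) bc t(1) by simp
    hence "h' q = inv\<^bsub>Q'\<^esub> (g t) \<otimes>\<^bsub>Q'\<^esub> g b" using Bu0 ring_hom_closed[OF that(1,3)] t(1) bc by blast
    thus ?thesis using hh[OF q t] by simp
  qed
  show ?thesis using hom hphi uq by blast
qed

end



inductive_set tow :: "'x set \<Rightarrow> ('x set \<Rightarrow> 'x set) \<Rightarrow> 'x set set" for b g where
  tb: "b \<in> tow b g"
| tg: "Z \<in> tow b g \<Longrightarrow> g Z \<in> tow b g"
| tu: "\<forall>J\<in>C. J \<in> tow b g \<Longrightarrow> \<exists>J. J \<in> C \<Longrightarrow> \<Union>C \<in> tow b g"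

lemma tow_base: assumes infl: "\<And>Z. Z \<subseteq> g Z" shows "Z \<in> tow b g \<Longrightarrow> b \<subseteq> Z"
proof (induction rule: tow.induct)
  case tb then show ?case by simp
next
  case (tg Z) then show ?case using infl by blast
next
  case (tu C) then show ?case by blast
qed

lemma tow_lemma1: assumes infl: "\<And>Z. Z \<subseteq> g Z" and m: "m \<in> tow b g"
  and hyp: "\<forall>x\<in>tow b g. x \<subseteq> m \<longrightarrow> x = m \<or> g x \<subseteq> m"
  shows "n \<in> tow b g \<Longrightarrow> n \<subseteq> m \<or> g m \<subseteq> n"
proof (induction rule: tow.induct)
  case tb then show ?case using tow_base[OF infl m] by simp
next
  case (tg Z)
  from tg.IH show ?case
  proof
    assume "Z \<subseteq> m" thus ?thesis using hyp tg.hyps by blast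
  next
    assume "g m \<subseteq> Z" thus ?thesis using infl[of Z] by blast
  qed
next
  case (tu C)
  show ?case
  proof (cases "\<forall>c\<in>C. c \<subseteq> m")
    case True thus ?thesis by blast
  next
    case False then obtain c where "c \<in> C" "\<not> c \<subseteq> m" by blast
    thus ?thesis using tu.IH by blast
  qed
qed

lemma tow_lemma2: assumes infl: "\<And>Z. Z \<subseteq> g Z"
  shows "m \<in> tow b g \<Longrightarrow> \<forall>x\<in>tow b g. x \<subseteq> m \<longrightarrow> x = m \<or> g x \<subseteq> m"
proof (induction rule: tow.induct)
  case tb then show ?case using tow_base[OF infl] by blast
next
  case (tg m)
  show ?case
  proof (intro ballI impI)
    fix x assume x: "x \<in> tow b g" "x \<subseteq> g m"
    have "x \<subseteq> m \<or> g m \<subseteq> x" using tow_lemma1[OF infl tg.hyps tg.IH x(1)] .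
    thus "x = g m \<or> g x \<subseteq> g m"
    proof
      assume "x \<subseteq> m"
      hence "x = m \<or> g x \<subseteq> m" using tg.IH x by blast
      thus ?thesis using infl[of m] by blast
    next
      assume "g m \<subseteq> x" thus ?thesis using x by blast
    qed
  qed
next
  case (tu C)
  show ?case
  proof (intro ballI impI)
    fix x assume x: "x \<in> tow b g" "x \<subseteq> \<Union>C"
    have L: "\<And>c. c \<in> C \<Longrightarrow> x \<subseteq> c \<or> g c \<subseteq> x" using tow_lemma1[OF infl _ _ x(1)] tu.IH tu.hyps by blast
    show "x = \<Union>C \<or> g x \<subseteq> \<Union>C"
    proof (cases "\<forall>c\<in>C. g c \<subseteq> x")
      case True
      hence "\<Union>C \<subseteq> x" using infl by blast
      thus ?thesis using x by blast
    next
      case False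
      then obtain c where c: "c \<in> C" "\<not> g c \<subseteq> x" by blast
      hence xc: "x \<subseteq> c" using L by blast
      hence "x = c \<or> g x \<subseteq> c" using tu.IH c(1) x(1) by blast
      thus ?thesis
      proof
        assume "g x \<subseteq> c" thus ?thesis using c by blast
      next
        assume xc: "x = c"
        have L2: "\<And>c'. c' \<in> C \<Longrightarrow> c' \<subseteq> c \<or> g c \<subseteq> c'"
          using tow_lemma1[OF infl _ _] tu.IH tu.hyps c(1) by blast
        show ?thesis
        proof (cases "\<forall>c'\<in>C. c' \<subseteq> c")
          case True thus ?thesis using xc c(1) by blast
        next
          case False then obtain c' where "c' \<in> C" "\<not> c' \<subseteq> c" by blast
          thus ?thesis using L2 xc by blast
        qed
      qed
    qed
  qed
qed

lemma tow_linear: assumes infl: "\<And>Z. Z \<subseteq> g Z" and "Z \<in> tow b g" "Y \<in> tow b g"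
  shows "Z \<subseteq> Y \<or> Y \<subseteq> Z"
  using tow_lemma1[OF infl assms(3) tow_lemma2[OF infl assms(3)] assms(2)] infl[of Y] by blast




lemma (in ring) idealI3:
  assumes "J \<subseteq> carrier R" "\<zero> \<in> J" "\<And>a b. a \<in> J \<Longrightarrow> b \<in> J \<Longrightarrow> a \<oplus> b \<in> J"
    "\<And>a. a \<in> J \<Longrightarrow> \<ominus> a \<in> J" "\<And>a x. a \<in> J \<Longrightarrow> x \<in> carrier R \<Longrightarrow> x \<otimes> a \<in> J"
    "\<And>a x. a \<in> J \<Longrightarrow> x \<in> carrier R \<Longrightarrow> a \<otimes> x \<in> J"
  shows "ideal J R"
proof (rule idealI[OF ring_axioms])
  show "subgroup J (add_monoid R)"
    by (rule add.subgroupI) (use assms in \<open>auto simp: a_inv_def[symmetric]\<close>)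
qed (use assms in auto)

locale oreR = ring R for R (structure) + fixes S assumes ore: "ore_set R S"
begin

lemma S_sub: "S \<subseteq> carrier R" and one_S: "\<one> \<in> S" and zero_S: "\<zero> \<notin> S"
  and S_mult: "s \<in> S \<Longrightarrow> t \<in> S \<Longrightarrow> s \<otimes> t \<in> S"
  and ore_l: "r \<in> carrier R \<Longrightarrow> s \<in> S \<Longrightarrow> \<exists>s'\<in>S. \<exists>r'\<in>carrier R. s' \<otimes> r = r' \<otimes> s"
  and ore_r: "r \<in> carrier R \<Longrightarrow> s \<in> S \<Longrightarrow> \<exists>s'\<in>S. \<exists>r'\<in>carrier R. r \<otimes> s' = s \<otimes> r'"
  using ore unfolding ore_set_def by auto

lemma Sc: "s \<in> S \<Longrightarrow> s \<in> carrier R" using S_sub by auto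

definition Lset :: "'a set \<Rightarrow> 'a set" where "Lset I = {a \<in> carrier R. \<exists>s\<in>S. s \<otimes> a \<in> I}"
definition Rset :: "'a set \<Rightarrow> 'a set" where "Rset I = {b \<in> carrier R. \<exists>t\<in>S. b \<otimes> t \<in> I}"
definition PS :: "'a set \<Rightarrow> 'a set" where "PS I = Lset I <+> Rset I"

lemma Lset_ideal: assumes I: "ideal I R" shows "ideal (Lset I) R"
proof -
  interpret I: ideal I R by fact
  show ?thesis
  proof (rule idealI3)
    show "Lset I \<subseteq> carrier R" unfolding Lset_def by auto
    show "\<zero> \<in> Lset I" unfolding Lset_def using one_S by force
    show "a \<oplus> b \<in> Lset I" if H: "a \<in> Lset I" "b \<in> Lset I" for a b
    proof -
      obtain s s' where s: "s \<in> S" "s \<otimes> a \<in> I" "s' \<in> S" "s' \<otimes> b \<in> I" and ab: "a \<in> carrier R" "b \<in> carrier R"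
        using H unfolding Lset_def by auto
      obtain u c where uc: "u \<in> S" "c \<in> carrier R" "u \<otimes> s = c \<otimes> s'" using ore_l[OF Sc[OF s(1)] s(3)] by blast
      have "(u \<otimes> s) \<otimes> (a \<oplus> b) = u \<otimes> (s \<otimes> a) \<oplus> c \<otimes> (s' \<otimes> b)"
        using uc s ab Sc by (simp add: r_distr m_assoc[symmetric])
      also have "\<dots> \<in> I" using s uc Sc by (simp add: I.I_l_closed)
      finally show ?thesis unfolding Lset_def using S_mult uc s ab by blast
    qed
    show "\<ominus> a \<in> Lset I" if H: "a \<in> Lset I" for a
    proof -
      obtain s where s: "s \<in> S" "s \<otimes> a \<in> I" and a: "a \<in> carrier R" using H unfolding Lset_def by auto
      have "s \<otimes> (\<ominus> a) = \<ominus> (s \<otimes> a)" using a Sc[OF s(1)] by (simp add: r_minus)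
      hence "s \<otimes> (\<ominus> a) \<in> I" using s(2) I.a_inv_closed by simp
      thus ?thesis unfolding Lset_def using s a by auto
    qed
    show "x \<otimes> a \<in> Lset I" if H: "a \<in> Lset I" "x \<in> carrier R" for a x
    proof -
      obtain s where s: "s \<in> S" "s \<otimes> a \<in> I" and a: "a \<in> carrier R" using H unfolding Lset_def by auto
      obtain u c where uc: "u \<in> S" "c \<in> carrier R" "u \<otimes> x = c \<otimes> s" using ore_l[OF H(2) s(1)] by blast
      have "u \<otimes> (x \<otimes> a) = c \<otimes> (s \<otimes> a)" using uc a H(2) Sc s by (metis m_assoc)
      hence "u \<otimes> (x \<otimes> a) \<in> I" using I.I_l_closed[OF s(2) uc(2)] by simp
      thus ?thesis unfolding Lset_def using uc(1) a H(2) by blast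
    qed
    show "a \<otimes> x \<in> Lset I" if H: "a \<in> Lset I" "x \<in> carrier R" for a x
    proof -
      obtain s where s: "s \<in> S" "s \<otimes> a \<in> I" and a: "a \<in> carrier R" using H unfolding Lset_def by auto
      have "s \<otimes> (a \<otimes> x) = (s \<otimes> a) \<otimes> x" using a H(2) Sc[OF s(1)] by (simp add: m_assoc)
      hence "s \<otimes> (a \<otimes> x) \<in> I" using I.I_r_closed[OF s(2) H(2)] by simp
      thus ?thesis unfolding Lset_def using s(1) a H(2) by blast
    qed
  qed
qed

lemma Rset_ideal: assumes I: "ideal I R" shows "ideal (Rset I) R"
proof -
  interpret I: ideal I R by fact
  show ?thesis
  proof (rule idealI3)
    show "Rset I \<subseteq> carrier R" unfolding Rset_def by auto
    show "\<zero> \<in> Rset I" unfolding Rset_def using one_S by force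
    show "a \<oplus> b \<in> Rset I" if H: "a \<in> Rset I" "b \<in> Rset I" for a b
    proof -
      obtain s s' where s: "s \<in> S" "a \<otimes> s \<in> I" "s' \<in> S" "b \<otimes> s' \<in> I" and ab: "a \<in> carrier R" "b \<in> carrier R"
        using H unfolding Rset_def by auto
      obtain u c where uc: "u \<in> S" "c \<in> carrier R" "s \<otimes> u = s' \<otimes> c" using ore_r[OF Sc[OF s(1)] s(3)] by blast
      have "(a \<oplus> b) \<otimes> (s \<otimes> u) = (a \<otimes> s) \<otimes> u \<oplus> (b \<otimes> s') \<otimes> c"
        using uc s ab Sc by (simp add: l_distr m_assoc)
      also have "\<dots> \<in> I" using s uc Sc by (simp add: I.I_r_closed)
      finally show ?thesis unfolding Rset_def using S_mult uc s ab by blast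
    qed
    show "\<ominus> a \<in> Rset I" if H: "a \<in> Rset I" for a
    proof -
      obtain s where s: "s \<in> S" "a \<otimes> s \<in> I" and a: "a \<in> carrier R" using H unfolding Rset_def by auto
      have "(\<ominus> a) \<otimes> s = \<ominus> (a \<otimes> s)" using a Sc[OF s(1)] by (simp add: l_minus)
      hence "(\<ominus> a) \<otimes> s \<in> I" using s(2) I.a_inv_closed by simp
      thus ?thesis unfolding Rset_def using s a by auto
    qed
    show "a \<otimes> x \<in> Rset I" if H: "a \<in> Rset I" "x \<in> carrier R" for a x
    proof -
      obtain s where s: "s \<in> S" "a \<otimes> s \<in> I" and a: "a \<in> carrier R" using H unfolding Rset_def by auto
      obtain u c where uc: "u \<in> S" "c \<in> carrier R" "x \<otimes> u = s \<otimes> c" using ore_r[OF H(2) s(1)] by blast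
      have "(a \<otimes> x) \<otimes> u = (a \<otimes> s) \<otimes> c" using uc a H(2) Sc s by (metis m_assoc)
      hence "(a \<otimes> x) \<otimes> u \<in> I" using I.I_r_closed[OF s(2) uc(2)] by simp
      thus ?thesis unfolding Rset_def using uc(1) a H(2) by blast
    qed
    show "x \<otimes> a \<in> Rset I" if H: "a \<in> Rset I" "x \<in> carrier R" for a x
    proof -
      obtain s where s: "s \<in> S" "a \<otimes> s \<in> I" and a: "a \<in> carrier R" using H unfolding Rset_def by auto
      have "(x \<otimes> a) \<otimes> s = x \<otimes> (a \<otimes> s)" using a H(2) Sc[OF s(1)] by (simp add: m_assoc)
      hence "(x \<otimes> a) \<otimes> s \<in> I" using I.I_l_closed[OF s(2) H(2)] by simp
      thus ?thesis unfolding Rset_def using s(1) a H(2) by blast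
    qed
  qed
qed

lemma PS_ideal: "ideal I R \<Longrightarrow> ideal (PS I) R"
  unfolding PS_def using add_ideals Lset_ideal Rset_ideal by blast

lemma PS_mem: "a \<in> Lset I \<Longrightarrow> b \<in> Rset I \<Longrightarrow> a \<oplus> b \<in> PS I"
  unfolding PS_def set_add_def' by blast

lemma PS_memE: "x \<in> PS I \<Longrightarrow> \<exists>a\<in>Lset I. \<exists>b\<in>Rset I. x = a \<oplus> b"
  unfolding PS_def set_add_def' by blast

lemma Lset_sub: "I \<subseteq> carrier R \<Longrightarrow> I \<subseteq> Lset I"
  unfolding Lset_def using one_S by force

lemma zero_Rset: "ideal I R \<Longrightarrow> \<zero> \<in> Rset I"
  unfolding Rset_def using one_S additive_subgroup.zero_closed[OF ideal.axioms(1)] by force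

lemma PS_infl: assumes "ideal I R" shows "I \<subseteq> PS I"
proof
  fix x assume x: "x \<in> I"
  have xc: "x \<in> carrier R" using x ideal.Icarr[OF assms] by blast
  have Ic: "I \<subseteq> carrier R" using ideal.Icarr[OF assms] by blast
  have "x \<oplus> \<zero> \<in> PS I" using PS_mem Lset_sub[OF Ic] x zero_Rset[OF assms] by blast
  thus "x \<in> PS I" using xc by simp
qed

lemma PS_carr: "PS I \<subseteq> carrier R"
  unfolding PS_def Lset_def Rset_def set_add_def' by auto

lemma p_one_eq: "p_one R S = PS {\<zero>}"
  unfolding p_one_def PS_def Lset_def Rset_def ass_l_def ass_r_def by simp

end



context oreR begin

lemma canon_eq: "canon R I = (+>) I" unfolding canon_def by (rule ext) simp

lemma ass_l_quot: assumes I: "ideal I R"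
  shows "ass_l (canon R I ` S) (R Quot I) = (+>) I ` Lset I"
proof -
  interpret I: ideal I R by fact
  have Ic: "I \<subseteq> carrier R" by (rule I.a_subset)
  show ?thesis
  proof
    show "ass_l (canon R I ` S) (R Quot I) \<subseteq> (+>) I ` Lset I"
    proof
      fix Z assume "Z \<in> ass_l (canon R I ` S) (R Quot I)"
      then obtain T where Z: "Z \<in> a_rcosets I" "T \<in> canon R I ` S" "rcoset_mult R I T Z = I"
        unfolding ass_l_def by (auto simp: FactRing_def)
      obtain a where a: "a \<in> carrier R" "Z = I +> a" using Z(1) unfolding A_RCOSETS_def' by blast
      obtain s where s: "s \<in> S" "T = I +> s" using Z(2) canon_eq by auto
      have "I +> (s \<otimes> a) = I" using Z(3) I.rcoset_mult_add[OF Sc[OF s(1)] a(1)] a s by simp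
      hence "s \<otimes> a \<in> I" using I.rcos_const_imp_mem Sc[OF s(1)] a(1) by blast
      thus "Z \<in> (+>) I ` Lset I" unfolding Lset_def using a s by blast
    qed
    show "(+>) I ` Lset I \<subseteq> ass_l (canon R I ` S) (R Quot I)"
    proof
      fix Z assume "Z \<in> (+>) I ` Lset I"
      then obtain a s where a: "a \<in> carrier R" "Z = I +> a" "s \<in> S" "s \<otimes> a \<in> I" unfolding Lset_def by blast
      have 1: "Z \<in> carrier (R Quot I)" using a_rcosetsI[OF Ic a(1)] a by (simp add: FactRing_def)
      have 2: "I +> s \<in> canon R I ` S" using a(3) canon_eq by auto
      have "(I +> s) \<otimes>\<^bsub>R Quot I\<^esub> Z = I +> (s \<otimes> a)"
        using I.rcoset_mult_add[OF Sc[OF a(3)] a(1)] a by (simp add: FactRing_def)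
      also have "\<dots> = \<zero>\<^bsub>R Quot I\<^esub>" using I.a_rcos_const[OF a(4)] by (simp add: FactRing_def)
      finally show "Z \<in> ass_l (canon R I ` S) (R Quot I)" unfolding ass_l_def using 1 2 by blast
    qed
  qed
qed

lemma ass_r_quot: assumes I: "ideal I R"
  shows "ass_r (canon R I ` S) (R Quot I) = (+>) I ` Rset I"
proof -
  interpret I: ideal I R by fact
  have Ic: "I \<subseteq> carrier R" by (rule I.a_subset)
  show ?thesis
  proof
    show "ass_r (canon R I ` S) (R Quot I) \<subseteq> (+>) I ` Rset I"
    proof
      fix Z assume "Z \<in> ass_r (canon R I ` S) (R Quot I)"
      then obtain T where Z: "Z \<in> a_rcosets I" "T \<in> canon R I ` S" "rcoset_mult R I Z T = I"
        unfolding ass_r_def by (auto simp: FactRing_def)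
      obtain a where a: "a \<in> carrier R" "Z = I +> a" using Z(1) unfolding A_RCOSETS_def' by blast
      obtain s where s: "s \<in> S" "T = I +> s" using Z(2) canon_eq by auto
      have "I +> (a \<otimes> s) = I" using Z(3) I.rcoset_mult_add[OF a(1) Sc[OF s(1)]] a s by simp
      hence "a \<otimes> s \<in> I" using I.rcos_const_imp_mem Sc[OF s(1)] a(1) by blast
      thus "Z \<in> (+>) I ` Rset I" unfolding Rset_def using a s by blast
    qed
    show "(+>) I ` Rset I \<subseteq> ass_r (canon R I ` S) (R Quot I)"
    proof
      fix Z assume "Z \<in> (+>) I ` Rset I"
      then obtain a s where a: "a \<in> carrier R" "Z = I +> a" "s \<in> S" "a \<otimes> s \<in> I" unfolding Rset_def by blast
      have 1: "Z \<in> carrier (R Quot I)" using a_rcosetsI[OF Ic a(1)] a by (simp add: FactRing_def)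
      have 2: "I +> s \<in> canon R I ` S" using a(3) canon_eq by auto
      have "Z \<otimes>\<^bsub>R Quot I\<^esub> (I +> s) = I +> (a \<otimes> s)"
        using I.rcoset_mult_add[OF a(1) Sc[OF a(3)]] a by (simp add: FactRing_def)
      also have "\<dots> = \<zero>\<^bsub>R Quot I\<^esub>" using I.a_rcos_const[OF a(4)] by (simp add: FactRing_def)
      finally show "Z \<in> ass_r (canon R I ` S) (R Quot I)" unfolding ass_r_def using 1 2 by blast
    qed
  qed
qed

lemma p_succ_eq: assumes I: "ideal I R" shows "p_succ R S I = PS I"
proof -
  interpret I: ideal I R by fact
  have Ic: "I \<subseteq> carrier R" by (rule I.a_subset)
  have Lc: "Lset I \<subseteq> carrier R" and Rc: "Rset I \<subseteq> carrier R" unfolding Lset_def Rset_def by auto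
  have addQ: "\<And>U V. U \<oplus>\<^bsub>R Quot I\<^esub> V = U <+> V" by (simp add: FactRing_def)
  have rs: "\<And>a b. a \<in> Lset I \<Longrightarrow> b \<in> Rset I \<Longrightarrow> (I +> a) <+> (I +> b) = I +> (a \<oplus> b)"
    using I.a_rcos_sum Lc Rc by blast
  have sum: "ass_l (canon R I ` S) (R Quot I) <+>\<^bsub>R Quot I\<^esub> ass_r (canon R I ` S) (R Quot I)
      = {I +> (a \<oplus> b) | a b. a \<in> Lset I \<and> b \<in> Rset I}"
    unfolding ass_l_quot[OF I] ass_r_quot[OF I] set_add_def'
    using rs by (auto simp: addQ)
  show ?thesis
  proof
    show "p_succ R S I \<subseteq> PS I"
    proof
      fix x assume "x \<in> p_succ R S I"
      then obtain a b where x: "x \<in> carrier R" "a \<in> Lset I" "b \<in> Rset I" "I +> x = I +> (a \<oplus> b)"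
        unfolding p_succ_def sum canon_def by auto
      have ab: "a \<in> carrier R" "b \<in> carrier R" using x Lc Rc by auto
      have "x \<in> I +> (a \<oplus> b)" using I.a_rcos_self[OF x(1)] x(4) by simp
      hence i: "x \<ominus> (a \<oplus> b) \<in> I" using I.a_rcos_module_minus[OF ring_axioms] x(1) ab by simp
      define i where "i = x \<ominus> (a \<oplus> b)"
      have ic: "i \<in> carrier R" using i Ic i_def by auto
      have e1: "i \<oplus> (a \<oplus> b) = x" unfolding i_def using x(1) ab by (simp add: minus_eq a_assoc l_neg)
      have e2: "x = (a \<oplus> i) \<oplus> b" using e1 ic ab by (simp add: a_ac)
      have "a \<oplus> i \<in> Lset I" using additive_subgroup.a_closed[OF ideal.axioms(1)[OF Lset_ideal[OF I]] x(2)] Lset_sub[OF Ic] i i_def by blast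
      thus "x \<in> PS I" using PS_mem[OF _ x(3)] e2 by simp
    qed
    show "PS I \<subseteq> p_succ R S I"
    proof
      fix x assume "x \<in> PS I"
      then obtain a b where x: "a \<in> Lset I" "b \<in> Rset I" "x = a \<oplus> b" using PS_memE by blast
      have "x \<in> carrier R" using x Lc Rc by auto
      thus "x \<in> p_succ R S I" unfolding p_succ_def sum canon_def using x by blast
    qed
  qed
qed

definition gS :: "'a set \<Rightarrow> 'a set" where "gS J = J \<union> PS J"

lemma gS_infl: "J \<subseteq> gS J" unfolding gS_def by blast

lemma tow_ideal: "J \<in> tow (PS {\<zero>}) gS \<Longrightarrow> ideal J R"
proof (induction rule: tow.induct)
  case tb then show ?case using PS_ideal zeroideal by blast
next
  case (tg Z)
  have "gS Z = PS Z" unfolding gS_def using PS_infl[OF tg.IH] by blast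
  then show ?case using PS_ideal[OF tg.IH] by simp
next
  case (tu C)
  have Ct: "\<forall>J\<in>C. J \<in> tow (PS {\<zero>}) gS" and Ci: "\<forall>J\<in>C. ideal J R" using tu.IH by blast+
  have ch0: "\<forall>x\<in>C. \<forall>y\<in>C. x \<subseteq> y \<or> y \<subseteq> x" using tow_linear[OF gS_infl] Ct by blast
  have ch: "subset.chain {I. ideal I R} C" unfolding subset_chain_def using ch0 Ci by blast
  have ne: "C \<noteq> {}" using tu.hyps by blast
  show ?case using chain_Union_is_ideal[OF ch] ne by simp
qed

lemma stages_tow: "J \<in> p_stages R S \<Longrightarrow> J \<in> tow (PS {\<zero>}) gS"
proof (induction rule: p_stages.induct)
  case base then show ?case using p_one_eq tow.tb by simp
next
  case (succ I)
  have i: "ideal I R" by (rule tow_ideal[OF succ.IH])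
  have "p_succ R S I = PS I" by (rule p_succ_eq[OF i])
  moreover have "gS I = PS I" unfolding gS_def using PS_infl[OF i] by blast
  ultimately show ?case using tow.tg[OF succ.IH] by simp
next
  case (lim C)
  have "\<forall>J\<in>C. J \<in> tow (PS {\<zero>}) gS" using lim.IH by blast
  then show ?case using tow.tu lim.hyps by blast
qed

lemma stage_ideal: "J \<in> p_stages R S \<Longrightarrow> ideal J R" using stages_tow tow_ideal by blast

lemma stages_linear: "J \<in> p_stages R S \<Longrightarrow> K \<in> p_stages R S \<Longrightarrow> J \<subseteq> K \<or> K \<subseteq> J"
  using stages_tow tow_linear[OF gS_infl] by blast

lemma p_of_ideal: "ideal (p_of R S) R"
proof -
  have "subset.chain {I. ideal I R} (p_stages R S)"
    unfolding subset_chain_def using stage_ideal stages_linear by blast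
  from chain_Union_is_ideal[OF this] have "ideal (if p_stages R S = {} then {\<zero>} else \<Union>(p_stages R S)) R" .
  moreover have "p_stages R S \<noteq> {}" using p_stages.base by blast
  ultimately show ?thesis unfolding p_of_def by simp
qed

end



lemma (in monoid) Units_r_cancel':
  assumes "u \<in> Units G" "y \<in> carrier G" "z \<in> carrier G" "y \<otimes> u = z \<otimes> u" shows "y = z"
proof -
  have "y = (y \<otimes> u) \<otimes> inv u" using assms(1,2) by (simp add: m_assoc Units_closed)
  also have "\<dots> = (z \<otimes> u) \<otimes> inv u" using assms(4) by simp
  also have "\<dots> = z" using assms(1,3) by (simp add: m_assoc Units_closed)
  finally show ?thesis .
qed

context oreR begin

lemma PS_disj: assumes I: "ideal I R" and d: "S \<inter> I = {}" shows "S \<inter> PS I = {}"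
proof (rule ccontr)
  interpret I: ideal I R by fact
  assume "S \<inter> PS I \<noteq> {}"
  then obtain u where u: "u \<in> S" "u \<in> PS I" by blast
  then obtain a b where ab: "a \<in> Lset I" "b \<in> Rset I" "u = a \<oplus> b" using PS_memE by blast
  obtain s t where st: "s \<in> S" "s \<otimes> a \<in> I" "t \<in> S" "b \<otimes> t \<in> I" and abc: "a \<in> carrier R" "b \<in> carrier R"
    using ab unfolding Lset_def Rset_def by blast
  have sc: "s \<in> carrier R" "t \<in> carrier R" using Sc st by auto
  have "(s \<otimes> u) \<otimes> t = (s \<otimes> a) \<otimes> t \<oplus> s \<otimes> (b \<otimes> t)"
    using ab(3) abc sc by (simp add: r_distr l_distr m_assoc)
  also have "\<dots> \<in> I" using I.a_closed[OF I.I_r_closed[OF st(2) sc(2)] I.I_l_closed[OF st(4) sc(1)]] .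
  finally have "(s \<otimes> u) \<otimes> t \<in> I" .
  moreover have "(s \<otimes> u) \<otimes> t \<in> S" using S_mult st u by blast
  ultimately show False using d by blast
qed

lemma stages_disj: "J \<in> p_stages R S \<Longrightarrow> S \<inter> J = {}"
proof (induction rule: p_stages.induct)
  case base
  have "S \<inter> {\<zero>} = {}" using zero_S by blast
  then show ?case using PS_disj[OF zeroideal] p_one_eq by simp
next
  case (succ I)
  then show ?case using PS_disj[OF stage_ideal[OF succ.hyps]] p_succ_eq[OF stage_ideal[OF succ.hyps]] by simp
next
  case (lim C) then show ?case by blast
qed

lemma p_of_disj: "S \<inter> p_of R S = {}" unfolding p_of_def using stages_disj by blast

lemma p_of_l: assumes "s \<in> S" "r \<in> carrier R" "s \<otimes> r \<in> p_of R S" shows "r \<in> p_of R S"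
proof -
  obtain J where J: "J \<in> p_stages R S" "s \<otimes> r \<in> J" using assms(3) unfolding p_of_def by blast
  have "r \<in> Lset J" unfolding Lset_def using assms J by blast
  hence "r \<oplus> \<zero> \<in> PS J" using PS_mem zero_Rset[OF stage_ideal[OF J(1)]] by blast
  hence "r \<in> p_succ R S J" using p_succ_eq[OF stage_ideal[OF J(1)]] assms(2) by simp
  thus ?thesis unfolding p_of_def using p_stages.succ[OF J(1)] by blast
qed

lemma p_of_r: assumes "s \<in> S" "r \<in> carrier R" "r \<otimes> s \<in> p_of R S" shows "r \<in> p_of R S"
proof -
  obtain J where J: "J \<in> p_stages R S" "r \<otimes> s \<in> J" using assms(3) unfolding p_of_def by blast
  have "r \<in> Rset J" unfolding Rset_def using assms J by blast
  moreover have "\<zero> \<in> Lset J" unfolding Lset_def using one_S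
    additive_subgroup.zero_closed[OF ideal.axioms(1)[OF stage_ideal[OF J(1)]]] by force
  ultimately have "\<zero> \<oplus> r \<in> PS J" using PS_mem by blast
  hence "r \<in> p_succ R S J" using p_succ_eq[OF stage_ideal[OF J(1)]] assms(2) by simp
  thus ?thesis unfolding p_of_def using p_stages.succ[OF J(1)] by blast
qed

lemma ker_PS:
  fixes Q' :: "('c, 'n) ring_scheme"
  assumes Q': "ring Q'" and f: "f \<in> ring_hom R Q'" and fu: "\<forall>s\<in>S. f s \<in> Units Q'"
    and I: "ideal I R" and k: "\<forall>x\<in>I. f x = \<zero>\<^bsub>Q'\<^esub>"
  shows "\<forall>x\<in>PS I. f x = \<zero>\<^bsub>Q'\<^esub>"
proof
  interpret Q': ring Q' by fact
  fix u assume "u \<in> PS I"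
  then obtain a b where ab: "a \<in> Lset I" "b \<in> Rset I" "u = a \<oplus> b" using PS_memE by blast
  obtain s t where st: "s \<in> S" "s \<otimes> a \<in> I" "t \<in> S" "b \<otimes> t \<in> I" and abc: "a \<in> carrier R" "b \<in> carrier R"
    using ab unfolding Lset_def Rset_def by blast
  have sc: "s \<in> carrier R" "t \<in> carrier R" using Sc st by auto
  have fc: "f a \<in> carrier Q'" "f b \<in> carrier Q'" using ring_hom_closed[OF f] abc by auto
  have fs: "f s \<in> Units Q'" "f t \<in> Units Q'" using fu st by auto
  have e1: "f (s \<otimes> a) = \<zero>\<^bsub>Q'\<^esub>" using k st(2) by blast
  have "f s \<otimes>\<^bsub>Q'\<^esub> f a = f s \<otimes>\<^bsub>Q'\<^esub> \<zero>\<^bsub>Q'\<^esub>"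
    using e1 ring_hom_mult[OF f sc(1) abc(1)] Q'.r_null[OF Q'.Units_closed[OF fs(1)]] by simp
  hence fa: "f a = \<zero>\<^bsub>Q'\<^esub>" using Q'.Units_l_cancel[OF fs(1) fc(1) Q'.zero_closed] by blast
  have e2: "f (b \<otimes> t) = \<zero>\<^bsub>Q'\<^esub>" using k st(4) by blast
  have "f b \<otimes>\<^bsub>Q'\<^esub> f t = \<zero>\<^bsub>Q'\<^esub> \<otimes>\<^bsub>Q'\<^esub> f t"
    using e2 ring_hom_mult[OF f abc(2) sc(2)] Q'.l_null[OF Q'.Units_closed[OF fs(2)]] by simp
  hence fb: "f b = \<zero>\<^bsub>Q'\<^esub>" using Q'.Units_r_cancel'[OF fs(2) fc(2) Q'.zero_closed] by blast
  show "f u = \<zero>\<^bsub>Q'\<^esub>" using ab(3) ring_hom_add[OF f abc] fa fb by simp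
qed

lemma p_of_ker:
  fixes Q' :: "('c, 'n) ring_scheme"
  assumes Q': "ring Q'" and f: "f \<in> ring_hom R Q'" and fu: "\<forall>s\<in>S. f s \<in> Units Q'"
  shows "\<forall>x\<in>p_of R S. f x = \<zero>\<^bsub>Q'\<^esub>"
proof -
  have z: "\<forall>x\<in>{\<zero>}. f x = \<zero>\<^bsub>Q'\<^esub>" using ring_hom_zero[OF f ring_axioms Q'] by blast
  have st: "\<forall>x\<in>J. f x = \<zero>\<^bsub>Q'\<^esub>" if J: "J \<in> p_stages R S" for J
    using J
  proof (induction rule: p_stages.induct)
    case base
    have "\<forall>x\<in>PS {\<zero>}. f x = \<zero>\<^bsub>Q'\<^esub>" by (rule ker_PS[OF Q' f fu zeroideal z])
    then show ?case unfolding p_one_eq .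
  next
    case (succ I)
    have i: "ideal I R" by (rule stage_ideal[OF succ.hyps])
    have "\<forall>x\<in>PS I. f x = \<zero>\<^bsub>Q'\<^esub>" by (rule ker_PS[OF Q' f fu i succ.IH])
    then show ?case unfolding p_succ_eq[OF i] .
  next
    case (lim C)
    have "\<forall>I\<in>C. \<forall>x\<in>I. f x = \<zero>\<^bsub>Q'\<^esub>" using lim.IH by blast
    then show ?case by blast
  qed
  show ?thesis unfolding p_of_def using st by blast
qed

end



context oreR begin

abbreviation "PP \<equiv> p_of R S"
abbreviation "BB \<equiv> R Quot PP"
abbreviation "cpi \<equiv> canon R PP"
abbreviation "TT \<equiv> cpi ` S"

lemma PP_ideal: "ideal PP R" by (rule p_of_ideal)

lemma BB_ring: "ring BB" by (rule ideal.quotient_is_ring[OF PP_ideal])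

lemma pi_hom: "cpi \<in> ring_hom R BB"
  unfolding canon_eq by (rule ideal.rcos_ring_hom[OF PP_ideal])

lemma pi_surj: "Z \<in> carrier BB \<Longrightarrow> \<exists>x\<in>carrier R. Z = cpi x"
  unfolding canon_def by (simp add: FactRing_def A_RCOSETS_def')

lemma pi_zero: assumes "x \<in> carrier R" shows "cpi x = \<zero>\<^bsub>BB\<^esub> \<longleftrightarrow> x \<in> PP"
proof -
  interpret I: ideal PP R by (rule PP_ideal)
  have z: "\<zero>\<^bsub>BB\<^esub> = PP" by (simp add: FactRing_def)
  show ?thesis unfolding canon_def z
  proof
    assume "PP +> x = PP" thus "x \<in> PP" by (rule I.rcos_const_imp_mem[OF assms])
  next
    assume "x \<in> PP" thus "PP +> x = PP" by (rule I.a_rcos_const)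
  qed
qed

lemma pi_eq: assumes "x \<in> carrier R" "y \<in> carrier R" "cpi x = cpi y" shows "x \<ominus> y \<in> PP"
proof -
  interpret I: ideal PP R by (rule PP_ideal)
  have "x \<in> PP +> y" using I.a_rcos_self[OF assms(1)] assms(3) unfolding canon_def by simp
  thus ?thesis using I.a_rcos_module_minus[OF ring_axioms assms(2,1)] by simp
qed

lemma pi_c: "x \<in> carrier R \<Longrightarrow> cpi x \<in> carrier BB" using ring_hom_closed[OF pi_hom] .
lemma pi_m: "x \<in> carrier R \<Longrightarrow> y \<in> carrier R \<Longrightarrow> cpi (x \<otimes> y) = cpi x \<otimes>\<^bsub>BB\<^esub> cpi y"
  using ring_hom_mult[OF pi_hom] .
lemma pi_1: "cpi \<one> = \<one>\<^bsub>BB\<^esub>" using ring_hom_one[OF pi_hom] .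

lemma TT_regl: assumes "t \<in> TT" "x \<in> carrier BB" "t \<otimes>\<^bsub>BB\<^esub> x = \<zero>\<^bsub>BB\<^esub>" shows "x = \<zero>\<^bsub>BB\<^esub>"
proof -
  obtain s where s: "s \<in> S" "t = cpi s" using assms(1) by blast
  obtain r where r: "r \<in> carrier R" "x = cpi r" using pi_surj[OF assms(2)] by blast
  have "cpi (s \<otimes> r) = \<zero>\<^bsub>BB\<^esub>" using assms(3) s r pi_m Sc by simp
  hence "s \<otimes> r \<in> PP" using pi_zero Sc[OF s(1)] r(1) by simp
  hence "r \<in> PP" using p_of_l s(1) r(1) by blast
  thus ?thesis using pi_zero r by simp
qed

lemma TT_regr: assumes "t \<in> TT" "x \<in> carrier BB" "x \<otimes>\<^bsub>BB\<^esub> t = \<zero>\<^bsub>BB\<^esub>" shows "x = \<zero>\<^bsub>BB\<^esub>"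
proof -
  obtain s where s: "s \<in> S" "t = cpi s" using assms(1) by blast
  obtain r where r: "r \<in> carrier R" "x = cpi r" using pi_surj[OF assms(2)] by blast
  have "cpi (r \<otimes> s) = \<zero>\<^bsub>BB\<^esub>" using assms(3) s r pi_m Sc by simp
  hence "r \<otimes> s \<in> PP" using pi_zero Sc[OF s(1)] r(1) by simp
  hence "r \<in> PP" using p_of_r s(1) r(1) by blast
  thus ?thesis using pi_zero r by simp
qed

lemma TT_ore_l: assumes "r \<in> carrier BB" "s \<in> TT"
  shows "\<exists>s'\<in>TT. \<exists>r'\<in>carrier BB. s' \<otimes>\<^bsub>BB\<^esub> r = r' \<otimes>\<^bsub>BB\<^esub> s"
proof -
  obtain s0 where s: "s0 \<in> S" "s = cpi s0" using assms(2) by blast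
  obtain r0 where r: "r0 \<in> carrier R" "r = cpi r0" using pi_surj[OF assms(1)] by blast
  obtain s' r' where o: "s' \<in> S" "r' \<in> carrier R" "s' \<otimes> r0 = r' \<otimes> s0" using ore_l[OF r(1) s(1)] by blast
  have "cpi s' \<otimes>\<^bsub>BB\<^esub> r = cpi r' \<otimes>\<^bsub>BB\<^esub> s"
    using pi_m[OF Sc[OF o(1)] r(1)] pi_m[OF o(2) Sc[OF s(1)]] o(3) r s by simp
  thus ?thesis using o pi_c by blast
qed

lemma TT_ore_r: assumes "r \<in> carrier BB" "s \<in> TT"
  shows "\<exists>s'\<in>TT. \<exists>r'\<in>carrier BB. r \<otimes>\<^bsub>BB\<^esub> s' = s \<otimes>\<^bsub>BB\<^esub> r'"
proof -
  obtain s0 where s: "s0 \<in> S" "s = cpi s0" using assms(2) by blast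
  obtain r0 where r: "r0 \<in> carrier R" "r = cpi r0" using pi_surj[OF assms(1)] by blast
  obtain s' r' where o: "s' \<in> S" "r' \<in> carrier R" "r0 \<otimes> s' = s0 \<otimes> r'" using ore_r[OF r(1) s(1)] by blast
  have "r \<otimes>\<^bsub>BB\<^esub> cpi s' = s \<otimes>\<^bsub>BB\<^esub> cpi r'"
    using pi_m[OF r(1) Sc[OF o(1)]] pi_m[OF Sc[OF s(1)] o(2)] o(3) r s by simp
  thus ?thesis using o pi_c by blast
qed

lemma TT_sub: "TT \<subseteq> carrier BB" using pi_c Sc by blast
lemma TT_one: "\<one>\<^bsub>BB\<^esub> \<in> TT"
proof -
  have "cpi \<one> \<in> TT" using one_S by blast
  thus ?thesis using pi_1 by simp
qed
lemma TT_mult: assumes "s \<in> TT" "t \<in> TT" shows "s \<otimes>\<^bsub>BB\<^esub> t \<in> TT"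
proof -
  obtain s0 t0 where st: "s0 \<in> S" "t0 \<in> S" "s = cpi s0" "t = cpi t0" using assms by blast
  have "cpi (s0 \<otimes> t0) \<in> TT" using S_mult st by blast
  thus ?thesis using pi_m[OF Sc[OF st(1)] Sc[OF st(2)]] st by simp
qed
lemma TT_zero: "\<zero>\<^bsub>BB\<^esub> \<notin> TT"
proof
  assume "\<zero>\<^bsub>BB\<^esub> \<in> TT"
  then obtain s where s: "s \<in> S" "cpi s = \<zero>\<^bsub>BB\<^esub>" by auto
  hence "s \<in> PP" using pi_zero Sc by simp
  thus False using p_of_disj s by blast
qed

lemma loc: "ore_loc BB TT"
  by (rule ore_loc.intro[OF BB_ring ore_loc_axioms.intro[OF TT_sub TT_one TT_mult TT_ore_l TT_regl TT_regr]])

lemma denom: "denominator_set BB TT"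
proof -
  interpret Bq: ring BB by (rule BB_ring)
  have o: "ore_set BB TT" unfolding ore_set_def
  proof (intro conjI ballI)
    show "TT \<subseteq> carrier BB" by (rule TT_sub)
    show "\<one>\<^bsub>BB\<^esub> \<in> TT" by (rule TT_one)
    show "\<zero>\<^bsub>BB\<^esub> \<notin> TT" by (rule TT_zero)
    show "s \<otimes>\<^bsub>BB\<^esub> t \<in> TT" if "s \<in> TT" "t \<in> TT" for s t using TT_mult that .
    show "\<exists>s'\<in>TT. \<exists>r'\<in>carrier BB. s' \<otimes>\<^bsub>BB\<^esub> r = r' \<otimes>\<^bsub>BB\<^esub> s" if "r \<in> carrier BB" "s \<in> TT" for r s
      using TT_ore_l that .
    show "\<exists>s'\<in>TT. \<exists>r'\<in>carrier BB. r \<otimes>\<^bsub>BB\<^esub> s' = s \<otimes>\<^bsub>BB\<^esub> r'" if "r \<in> carrier BB" "s \<in> TT" for r s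
      using TT_ore_r that .
  qed
  have 1: "\<forall>r\<in>carrier BB. \<forall>s\<in>TT. r \<otimes>\<^bsub>BB\<^esub> s = \<zero>\<^bsub>BB\<^esub> \<longrightarrow> (\<exists>t\<in>TT. t \<otimes>\<^bsub>BB\<^esub> r = \<zero>\<^bsub>BB\<^esub>)"
  proof (intro ballI impI)
    fix r s assume a: "r \<in> carrier BB" "s \<in> TT" "r \<otimes>\<^bsub>BB\<^esub> s = \<zero>\<^bsub>BB\<^esub>"
    have "r = \<zero>\<^bsub>BB\<^esub>" by (rule TT_regr[OF a(2) a(1) a(3)])
    hence "\<one>\<^bsub>BB\<^esub> \<otimes>\<^bsub>BB\<^esub> r = \<zero>\<^bsub>BB\<^esub>" using Bq.r_null[OF Bq.one_closed] by simp
    thus "\<exists>t\<in>TT. t \<otimes>\<^bsub>BB\<^esub> r = \<zero>\<^bsub>BB\<^esub>" using TT_one by blast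
  qed
  have 2: "\<forall>r\<in>carrier BB. \<forall>s\<in>TT. s \<otimes>\<^bsub>BB\<^esub> r = \<zero>\<^bsub>BB\<^esub> \<longrightarrow> (\<exists>t\<in>TT. r \<otimes>\<^bsub>BB\<^esub> t = \<zero>\<^bsub>BB\<^esub>)"
  proof (intro ballI impI)
    fix r s assume a: "r \<in> carrier BB" "s \<in> TT" "s \<otimes>\<^bsub>BB\<^esub> r = \<zero>\<^bsub>BB\<^esub>"
    have "r = \<zero>\<^bsub>BB\<^esub>" by (rule TT_regl[OF a(2) a(1) a(3)])
    hence "r \<otimes>\<^bsub>BB\<^esub> \<one>\<^bsub>BB\<^esub> = \<zero>\<^bsub>BB\<^esub>" using Bq.l_null[OF Bq.one_closed] by simp
    thus "\<exists>t\<in>TT. r \<otimes>\<^bsub>BB\<^esub> t = \<zero>\<^bsub>BB\<^esub>" using TT_one by blast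
  qed
  show ?thesis unfolding denominator_set_def using o 1 2 by blast
qed

lemma regular: assumes "s \<in> S" shows "regular_elem BB (cpi s)"
proof -
  have t: "cpi s \<in> TT" using assms by blast
  show ?thesis unfolding regular_elem_def
    using TT_regl[OF t] TT_regr[OF t] pi_c[OF Sc[OF assms]] by blast
qed

lemma univ: "universal_for R S (ore_loc.Q BB TT) (\<lambda>r. ore_loc.phi BB (cpi r)) TYPE('t)"
proof -
  have RQ: "ring (ore_loc.Q BB TT)" by (rule ore_loc.ring_Q[OF loc])
  have hom0: "ore_loc.phi BB \<circ> cpi \<in> ring_hom R (ore_loc.Q BB TT)"
    by (rule ring_hom_trans[OF pi_hom ore_loc.phi_hom[OF loc]])
  have hom: "(\<lambda>r. ore_loc.phi BB (cpi r)) \<in> ring_hom R (ore_loc.Q BB TT)"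
    using hom0 by (simp add: comp_def)
  have un: "\<forall>s\<in>S. ore_loc.phi BB (cpi s) \<in> Units (ore_loc.Q BB TT)"
    using ore_loc.phi_unit[OF loc] by blast
  have inv: "inverts R S (ore_loc.Q BB TT) (\<lambda>r. ore_loc.phi BB (cpi r))"
    unfolding inverts_def using RQ hom un by blast
  have main: "\<exists>h. h \<in> ring_hom (ore_loc.Q BB TT) Q' \<and> (\<forall>r\<in>carrier R. f' r = h (ore_loc.phi BB (cpi r))) \<and>
             (\<forall>h'. h' \<in> ring_hom (ore_loc.Q BB TT) Q' \<and> (\<forall>r\<in>carrier R. f' r = h' (ore_loc.phi BB (cpi r))) \<longrightarrow>
                   (\<forall>q\<in>carrier (ore_loc.Q BB TT). h' q = h q))"
    if iv: "inverts R S Q' f'" for Q' :: "'t ring" and f'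
  proof -
    have Q': "ring Q'" and f': "f' \<in> ring_hom R Q'" and fu: "\<forall>s\<in>S. f' s \<in> Units Q'"
      using iv unfolding inverts_def by auto
    interpret Q': ring Q' by (rule Q')
    have ker: "\<forall>x\<in>PP. f' x = \<zero>\<^bsub>Q'\<^esub>" by (rule p_of_ker[OF Q' f' fu])
    define g where "g Z = f' (SOME x. x \<in> carrier R \<and> Z = cpi x)" for Z
    have gpi: "g (cpi x) = f' x" if x: "x \<in> carrier R" for x
    proof -
      define y where "y = (SOME y. y \<in> carrier R \<and> cpi x = cpi y)"
      have "\<exists>y. y \<in> carrier R \<and> cpi x = cpi y" using x by blast
      hence "y \<in> carrier R \<and> cpi x = cpi y" unfolding y_def by (rule someI_ex)
      hence y: "y \<in> carrier R" "cpi x = cpi y" by auto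
      have d: "y \<ominus> x \<in> PP" using pi_eq[OF y(1) x] y(2) by simp
      have e: "y = (y \<ominus> x) \<oplus> x" using x y(1) by (simp add: minus_eq a_assoc l_neg)
      have "f' y = f' (y \<ominus> x) \<oplus>\<^bsub>Q'\<^esub> f' x" using e ring_hom_add[OF f' _ x, of "y \<ominus> x"] y(1) x by simp
      also have "\<dots> = f' x" using ker d ring_hom_closed[OF f' x] by simp
      finally show ?thesis unfolding g_def y_def[symmetric] .
    qed
    have gc: "g Z \<in> carrier Q'" if "Z \<in> carrier BB" for Z
      using pi_surj[OF that] gpi ring_hom_closed[OF f'] by force
    have ghom: "g \<in> ring_hom BB Q'"
    proof (rule ring_hom_memI)
      show "\<And>x. x \<in> carrier BB \<Longrightarrow> g x \<in> carrier Q'" by (rule gc)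
      show "g (Z \<otimes>\<^bsub>BB\<^esub> W) = g Z \<otimes>\<^bsub>Q'\<^esub> g W" if ZW: "Z \<in> carrier BB" "W \<in> carrier BB" for Z W
      proof -
        obtain x y where xy: "x \<in> carrier R" "Z = cpi x" "y \<in> carrier R" "W = cpi y" using pi_surj[OF ZW(1)] pi_surj[OF ZW(2)] by meson
        show ?thesis using xy pi_m[OF xy(1,3), symmetric] gpi[OF m_closed[OF xy(1,3)]] gpi[OF xy(1)] gpi[OF xy(3)] ring_hom_mult[OF f' xy(1,3)] by simp
      qed
      show "g (Z \<oplus>\<^bsub>BB\<^esub> W) = g Z \<oplus>\<^bsub>Q'\<^esub> g W" if ZW: "Z \<in> carrier BB" "W \<in> carrier BB" for Z W
      proof -
        obtain x y where xy: "x \<in> carrier R" "Z = cpi x" "y \<in> carrier R" "W = cpi y" using pi_surj[OF ZW(1)] pi_surj[OF ZW(2)] by meson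
        show ?thesis using xy ring_hom_add[OF pi_hom xy(1,3), symmetric] gpi[OF a_closed[OF xy(1,3)]] gpi[OF xy(1)] gpi[OF xy(3)] ring_hom_add[OF f' xy(1,3)] by simp
      qed
      show "g \<one>\<^bsub>BB\<^esub> = \<one>\<^bsub>Q'\<^esub>" using gpi[of \<one>] pi_1 ring_hom_one[OF f'] by simp
    qed
    have gu: "\<forall>t\<in>TT. g t \<in> Units Q'" using gpi fu Sc by auto
    obtain h where h: "h \<in> ring_hom (ore_loc.Q BB TT) Q'" "\<forall>b\<in>carrier BB. g b = h (ore_loc.phi BB b)"
      "\<forall>h'. h' \<in> ring_hom (ore_loc.Q BB TT) Q' \<and> (\<forall>b\<in>carrier BB. g b = h' (ore_loc.phi BB b)) \<longrightarrow>
          (\<forall>q\<in>carrier (ore_loc.Q BB TT). h' q = h q)"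
      using ore_loc.loc_universal[OF loc Q' ghom gu] by blast
    have 1: "\<forall>r\<in>carrier R. f' r = h (ore_loc.phi BB (cpi r))" using h(2) gpi pi_c by simp
    have 2: "\<forall>q\<in>carrier (ore_loc.Q BB TT). h' q = h q"
      if "h' \<in> ring_hom (ore_loc.Q BB TT) Q'" "\<forall>r\<in>carrier R. f' r = h' (ore_loc.phi BB (cpi r))" for h'
    proof -
      have "\<forall>b\<in>carrier BB. g b = h' (ore_loc.phi BB b)"
      proof
        fix b assume "b \<in> carrier BB"
        then obtain r where r: "r \<in> carrier R" "b = cpi r" using pi_surj by blast
        show "g b = h' (ore_loc.phi BB b)" using r that(2) gpi by simp
      qed
      thus ?thesis using h(3) that(1) by blast
    qed
    show ?thesis using h(1) 1 2 by blast
  qed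
  show ?thesis unfolding universal_for_def using inv main by blast
qed

end



lemma univ_iso:
  fixes R :: "('a, 'm) ring_scheme" and Q :: "'q ring" and Q' :: "'c ring"
  assumes A1: "universal_for R S Q f TYPE('c)" and A2: "universal_for R S Q f TYPE('q)"
    and A3: "universal_for R S Q' f' TYPE('c)" and A4: "universal_for R S Q' f' TYPE('q)"
  shows "\<exists>h. h \<in> ring_iso Q Q' \<and> (\<forall>r\<in>carrier R. f' r = h (f r))"
proof -
  have iQ: "inverts R S Q f" using A1 unfolding universal_for_def by (rule conjunct1)
  have iQ': "inverts R S Q' f'" using A3 unfolding universal_for_def by (rule conjunct1)
  have U1: "\<forall>(Q'' :: 'c ring) f''. inverts R S Q'' f'' \<longrightarrow>
        (\<exists>h. h \<in> ring_hom Q Q'' \<and> (\<forall>r\<in>carrier R. f'' r = h (f r)) \<and>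
             (\<forall>h'. h' \<in> ring_hom Q Q'' \<and> (\<forall>r\<in>carrier R. f'' r = h' (f r)) \<longrightarrow>
                   (\<forall>q\<in>carrier Q. h' q = h q)))" using A1 unfolding universal_for_def by (rule conjunct2)
  have U2: "\<forall>(Q'' :: 'q ring) f''. inverts R S Q'' f'' \<longrightarrow>
        (\<exists>h. h \<in> ring_hom Q Q'' \<and> (\<forall>r\<in>carrier R. f'' r = h (f r)) \<and>
             (\<forall>h'. h' \<in> ring_hom Q Q'' \<and> (\<forall>r\<in>carrier R. f'' r = h' (f r)) \<longrightarrow>
                   (\<forall>q\<in>carrier Q. h' q = h q)))" using A2 unfolding universal_for_def by (rule conjunct2)
  have U3: "\<forall>(Q'' :: 'c ring) f''. inverts R S Q'' f'' \<longrightarrow>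
        (\<exists>h. h \<in> ring_hom Q' Q'' \<and> (\<forall>r\<in>carrier R. f'' r = h (f' r)) \<and>
             (\<forall>h'. h' \<in> ring_hom Q' Q'' \<and> (\<forall>r\<in>carrier R. f'' r = h' (f' r)) \<longrightarrow>
                   (\<forall>q\<in>carrier Q'. h' q = h q)))" using A3 unfolding universal_for_def by (rule conjunct2)
  have U4: "\<forall>(Q'' :: 'q ring) f''. inverts R S Q'' f'' \<longrightarrow>
        (\<exists>h. h \<in> ring_hom Q' Q'' \<and> (\<forall>r\<in>carrier R. f'' r = h (f' r)) \<and>
             (\<forall>h'. h' \<in> ring_hom Q' Q'' \<and> (\<forall>r\<in>carrier R. f'' r = h' (f' r)) \<longrightarrow>
                   (\<forall>q\<in>carrier Q'. h' q = h q)))" using A4 unfolding universal_for_def by (rule conjunct2)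
  obtain h where h: "h \<in> ring_hom Q Q'" "\<forall>r\<in>carrier R. f' r = h (f r)"
    using U1[rule_format, OF iQ'] by blast
  obtain k where k: "k \<in> ring_hom Q' Q" "\<forall>r\<in>carrier R. f r = k (f' r)"
    using U4[rule_format, OF iQ] by blast
  obtain e where e: "\<forall>h'. h' \<in> ring_hom Q Q \<and> (\<forall>r\<in>carrier R. f r = h' (f r)) \<longrightarrow> (\<forall>q\<in>carrier Q. h' q = e q)"
    using U2[rule_format, OF iQ] by blast
  obtain e' where e': "\<forall>h'. h' \<in> ring_hom Q' Q' \<and> (\<forall>r\<in>carrier R. f' r = h' (f' r)) \<longrightarrow> (\<forall>q\<in>carrier Q'. h' q = e' q)"
    using U3[rule_format, OF iQ'] by blast
  have idQ: "id \<in> ring_hom Q Q" by (rule ring_hom_memI) auto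
  have idQ': "id \<in> ring_hom Q' Q'" by (rule ring_hom_memI) auto
  have kh: "k \<circ> h \<in> ring_hom Q Q" by (rule ring_hom_trans[OF h(1) k(1)])
  have hk: "h \<circ> k \<in> ring_hom Q' Q'" by (rule ring_hom_trans[OF k(1) h(1)])
  have 1: "\<forall>q\<in>carrier Q. k (h q) = q"
  proof -
    have p: "\<forall>r\<in>carrier R. f r = (k \<circ> h) (f r)" using h(2) k(2) by simp
    have c1: "\<forall>q\<in>carrier Q. (k \<circ> h) q = e q" using e kh p by blast
    have p2: "\<forall>r\<in>carrier R. f r = id (f r)" by simp
    have c2: "\<forall>q\<in>carrier Q. id q = e q" using e idQ p2 by blast
    show ?thesis using c1 c2 by simp
  qed
  have 2: "\<forall>q\<in>carrier Q'. h (k q) = q"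
  proof -
    have p: "\<forall>r\<in>carrier R. f' r = (h \<circ> k) (f' r)" using h(2) k(2) by simp
    have c1: "\<forall>q\<in>carrier Q'. (h \<circ> k) q = e' q" using e' hk p by blast
    have p2: "\<forall>r\<in>carrier R. f' r = id (f' r)" by simp
    have c2: "\<forall>q\<in>carrier Q'. id q = e' q" using e' idQ' p2 by blast
    show ?thesis using c1 c2 by simp
  qed
  have "bij_betw h (carrier Q) (carrier Q')"
    by (rule bij_betw_byWitness[OF 1 2]) (use ring_hom_closed[OF h(1)] ring_hom_closed[OF k(1)] in auto)
  thus ?thesis using h unfolding ring_iso_def by blast
qed

theorem corollary4p16:
  fixes R :: "('a, 'm) ring_scheme" and S :: "'a set"
  assumes "ring R" and "ore_set R S"
  shows "\<exists>(Q :: ('a set \<times> 'a set) set ring) f.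
           universal_for R S Q f TYPE('c) \<and>
           universal_for R S Q f TYPE(('a set \<times> 'a set) set) \<and>
           (\<forall>(Q' :: 'c ring) f'.
              universal_for R S Q' f' TYPE('c) \<and>
              universal_for R S Q' f' TYPE(('a set \<times> 'a set) set) \<longrightarrow>
              (\<exists>h. h \<in> ring_iso Q Q' \<and> (\<forall>r\<in>carrier R. f' r = h (f r)))) \<and>
           (\<exists>\<phi>. left_localization (R Quot p_of R S) (canon R (p_of R S) ` S) Q \<phi> \<and>
                 (\<forall>r\<in>carrier R. f r = \<phi> (canon R (p_of R S) r)))
         \<and> ideal (p_of R S) R
         \<and> denominator_set (R Quot p_of R S) (canon R (p_of R S) ` S)
         \<and> (\<forall>s\<in>S. regular_elem (R Quot p_of R S) (canon R (p_of R S) s))"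
proof -
  interpret O: oreR R S by (rule oreR.intro[OF assms(1) oreR_axioms.intro[OF assms(2)]])
  let ?Q = "ore_loc.Q (R Quot p_of R S) (canon R (p_of R S) ` S)"
  let ?f = "\<lambda>r. ore_loc.phi (R Quot p_of R S) (canon R (p_of R S) r)"
  have u1: "universal_for R S ?Q ?f TYPE('c)" by (rule O.univ)
  have u2: "universal_for R S ?Q ?f TYPE(('a set \<times> 'a set) set)" by (rule O.univ)
  have u3: "\<forall>(Q' :: 'c ring) f'.
              universal_for R S Q' f' TYPE('c) \<and>
              universal_for R S Q' f' TYPE(('a set \<times> 'a set) set) \<longrightarrow>
              (\<exists>h. h \<in> ring_iso ?Q Q' \<and> (\<forall>r\<in>carrier R. f' r = h (?f r)))"
  proof (intro allI impI)
    fix Q' :: "'c ring" and f' assume a: "universal_for R S Q' f' TYPE('c) \<and> universal_for R S Q' f' TYPE(('a set \<times> 'a set) set)"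
    show "\<exists>h. h \<in> ring_iso ?Q Q' \<and> (\<forall>r\<in>carrier R. f' r = h (?f r))"
      by (rule univ_iso[OF u1 u2 conjunct1[OF a] conjunct2[OF a]])
  qed
  have u4: "\<exists>\<phi>. left_localization (R Quot p_of R S) (canon R (p_of R S) ` S) ?Q \<phi> \<and>
                 (\<forall>r\<in>carrier R. ?f r = \<phi> (canon R (p_of R S) r))"
    using ore_loc.phi_loc[OF O.loc] by blast
  have u5: "\<forall>s\<in>S. regular_elem (R Quot p_of R S) (canon R (p_of R S) s)" using O.regular by blast
  show ?thesis
    by (rule exI[of _ ?Q], rule exI[of _ ?f], intro conjI u1 u2 u3 u4 u5 O.p_of_ideal O.denom)
qed


end
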